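(* For every $M\in\Lambda^{001}$ the following are equivalent: (1) there exists $N\in\Lambda^{001}$ in head normal form such that $M\longrightarrow_\beta^\infty N$; (2) there exists $s\in\mathcal T(M)$ such that $\mathrm{nf}_r(s)\neq 0$; (3) there exists $N\in\Lambda^{001}$ in head normal form such that $M\longrightarrow_h^* N$.
   Context: $\Lambda^{001}$ is the set of possibly infinite λ-terms (trees of variables, abstractions $\lambda x.M$ and applications $(M)N$) whose infinite branches all enter infinitely often the argument position of an application, up to α-equivalence; $M[N/x]$ is capture-avoiding substitution; $\longrightarrow_\beta$ is the contextual closure (finite derivations) of $(\lambda x.M)N\longrightarrow_\beta M[N/x]$ and $\longrightarrow_\beta^*$ its reflexive-transitive closure. The infinitary reduction $\longrightarrow_\beta^\infty$ is defined by the rules below, with possibly infinite derivations in which every infinite branch passes infinitely often through the third premise of (@): (var) $M\longrightarrow_\beta^* x\Rightarrow M\longrightarrow_\beta^\infty x$; (λ) $M\longrightarrow_\beta^*\lambda x.P$, $P\longrightarrow_\beta^\infty P'$ $\Rightarrow M\longrightarrow_\beta^\infty\lambda x.P'$; (@) $M\longrightarrow_\beta^*(P)Q$, $P\longrightarrow_\beta^\infty P'$, $Q\longrightarrow_\beta^\infty Q'$ $\Rightarrow M\longrightarrow_\beta^\infty(P')Q'$. A term is in head normal form if it has the form $\lambda x_1\dots\lambda x_m.(\dots((y)Q_1)\dots)Q_n$; otherwise it has the form $\lambda x_1\dots\lambda x_m.(\dots((\lambda z.N)P)Q_1\dots)Q_n$ and its head reduct is $\lambda x_1\dots\lambda x_m.(\dots((N[P/z])Q_1)\dots)Q_n$;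 $\longrightarrow_h$ is head reduction and $\longrightarrow_h^*$ its reflexive-transitive closure. Resource terms: $s::=x\mid\lambda x.s\mid\langle s\rangle\bar t$, $\bar t$ a finite multiset of resource terms; finite sums are finite sets of resource terms ($0$ the empty sum). Resource reduction: $\longmapsto_r$ is the least relation from terms (resp. monomials) to finite sums containing $\langle\lambda x.s\rangle\bar t\longmapsto_r s\langle\bar t/x\rangle$ (where, for $\bar t=[t_1,\dots,t_n]$, $s\langle\bar t/x\rangle$ is the sum over $\sigma\in\mathfrak S_n$ of the linear substitutions of $t_{\sigma(i)}$ for the $i$-th free occurrence of $x$ if $x$ occurs exactly $n$ times freely in $s$, and $0$ otherwise) and closed under all term and monomial contexts; on finite sums, $\sum_{i=0}^n s_i\longrightarrow_r\sum_{i=0}^n T_i$ when $s_0\longmapsto_r T_0$ and each other $s_i$ either reduces to $T_i$ or equals it. This reduction is confluent and weakly normalising, and $\mathrm{nf}_r(s)$ denotes the normal form of $s$. Taylor approximation $\ltimes$ is inductive: $x\ltimes x$; $s\ltimes M\Rightarrow\lambda x.s\ltimes\lambda x.M$; ($s\ltimes M$ and $t_i\ltimes N$ for all $i$) $\Rightarrow\langle s\rangle[t_1,\dots,t_n]\ltimes(M)N$; $\mathcal T(M)=\{s : s\ltimes M\}$. *)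

theory Defs
  imports Main "HOL-Library.Multiset"
begin

section \<open>Possibly infinite lambda-terms (de Bruijn indices, so alpha-equivalence is built in)\<close>

codatatype tm = Var nat | Lam tm | App tm tm

primcorec lift :: "nat \<Rightarrow> tm \<Rightarrow> tm" where
  "lift k M = (case M of
      Var n \<Rightarrow> Var (if n < k then n else Suc n)
    | Lam P \<Rightarrow> Lam (lift (Suc k) P)
    | App P Q \<Rightarrow> App (lift k P) (lift k Q))"

text \<open>Capture-avoiding substitution of \<open>N\<close> for index \<open>k\<close> (binder removed: indices \<open>> k\<close> decremented).\<close>
primcorec subst :: "nat \<Rightarrow> tm \<Rightarrow> tm \<Rightarrow> tm" where
  "subst k N M = (case M of
      Var n \<Rightarrow> (if n = k then
                   (case N of Var j \<Rightarrow> Var j | Lam P \<Rightarrow> Lam P | App P Q \<Rightarrow> App P Q)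
                 else Var (if k < n then n - 1 else n))
    | Lam P \<Rightarrow> Lam (subst (Suc k) (lift 0 N) P)
    | App P Q \<Rightarrow> App (subst k N P) (subst k N Q))"

text \<open>\<open>M[N/x]\<close> where \<open>x\<close> is bound by the outermost abstraction (index 0).\<close>
definition subst0 :: "tm \<Rightarrow> tm \<Rightarrow> tm" where
  "subst0 M N = subst 0 N M"

datatype dir = DLam | DFun | DArg

primrec subterm_at :: "tm \<Rightarrow> dir list \<Rightarrow> tm option" where
  "subterm_at M [] = Some M"
| "subterm_at M (d # ds) = (case (d, M) of
      (DLam, Lam P) \<Rightarrow> subterm_at P ds
    | (DFun, App P Q) \<Rightarrow> subterm_at P ds
    | (DArg, App P Q) \<Rightarrow> subterm_at Q ds
    | _ \<Rightarrow> None)"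

text \<open>An infinite branch of \<open>M\<close> is an infinite sequence of directions all of whose finite
  prefixes are positions of \<open>M\<close>; it must enter argument position infinitely often.\<close>
definition Lambda001 :: "tm set" where
  "Lambda001 = {M. \<forall>f :: nat \<Rightarrow> dir.
      (\<forall>n. subterm_at M (map f [0..<n]) \<noteq> None) \<longrightarrow> (\<forall>n. \<exists>m\<ge>n. f m = DArg)}"

inductive beta :: "tm \<Rightarrow> tm \<Rightarrow> bool" where
  redex: "beta (App (Lam M) N) (subst0 M N)"
| lam: "beta M M' \<Longrightarrow> beta (Lam M) (Lam M')"
| appL: "beta M M' \<Longrightarrow> beta (App M N) (App M' N)"
| appR: "beta N N' \<Longrightarrow> beta (App M N) (App M N')"

abbreviation beta_star :: "tm \<Rightarrow> tm \<Rightarrow> bool" where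
  "beta_star \<equiv> beta\<^sup>*\<^sup>*"

subsection \<open>Infinitary beta-reduction (mixed inductive/coinductive: every infinite branch
  of a derivation passes infinitely often through the argument premise of (@))\<close>

inductive inf_step :: "(tm \<Rightarrow> tm \<Rightarrow> bool) \<Rightarrow> tm \<Rightarrow> tm \<Rightarrow> bool" for R where
  ivar: "beta_star M (Var x) \<Longrightarrow> inf_step R M (Var x)"
| ilam: "beta_star M (Lam P) \<Longrightarrow> inf_step R P P' \<Longrightarrow> inf_step R M (Lam P')"
| iapp: "beta_star M (App P Q) \<Longrightarrow> inf_step R P P' \<Longrightarrow> R Q Q' \<Longrightarrow> inf_step R M (App P' Q')"

lemma inf_step_mono[mono]:
  "(\<And>x y. R x y \<longrightarrow> S x y) \<Longrightarrow> inf_step R M N \<longrightarrow> inf_step S M N"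
proof
  assume H: "\<And>x y. R x y \<longrightarrow> S x y"
  assume "inf_step R M N"
  then show "inf_step S M N"
    by (induction rule: inf_step.induct) (auto intro: inf_step.intros H[rule_format])
qed

coinductive beta_inf :: "tm \<Rightarrow> tm \<Rightarrow> bool" where
  "inf_step beta_inf M N \<Longrightarrow> beta_inf M N"

inductive head_var_spine :: "tm \<Rightarrow> bool" where
  "head_var_spine (Var y)"
| "head_var_spine P \<Longrightarrow> head_var_spine (App P Q)"

inductive hnf :: "tm \<Rightarrow> bool" where
  "head_var_spine M \<Longrightarrow> hnf M"
| "hnf M \<Longrightarrow> hnf (Lam M)"

inductive hred :: "tm \<Rightarrow> tm \<Rightarrow> bool" where
  hredex: "hred (App (Lam N) P) (subst0 N P)"
| hlam: "hred M M' \<Longrightarrow> hred (Lam M) (Lam M')"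
| happ: "hred P P' \<Longrightarrow> \<not> is_Lam P \<Longrightarrow> hred (App P Q) (App P' Q)"

datatype rtm = RVar nat | RLam rtm | RApp rtm "rtm multiset"

text \<open>Finite sums are finite sets of resource terms; \<open>{}\<close> is the sum \<open>0\<close>.\<close>

primrec rlift :: "nat \<Rightarrow> rtm \<Rightarrow> rtm" where
  "rlift k (RVar n) = RVar (if n < k then n else Suc n)"
| "rlift k (RLam s) = RLam (rlift (Suc k) s)"
| "rlift k (RApp s ts) = RApp (rlift k s) (image_mset (rlift k) ts)"

text \<open>\<open>lsub k s ts s'\<close>: \<open>s'\<close> is one summand of the linear substitution \<open>s\<langle>ts/k\<rangle>\<close>, i.e. the
  elements of \<open>ts\<close> are distributed bijectively over the free occurrences of index \<open>k\<close>
  (the binder being removed). There is no summand if the count does not match.\<close>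
inductive lsub :: "nat \<Rightarrow> rtm \<Rightarrow> rtm multiset \<Rightarrow> rtm \<Rightarrow> bool"
  and lsub_ms :: "nat \<Rightarrow> rtm multiset \<Rightarrow> rtm multiset \<Rightarrow> rtm multiset \<Rightarrow> bool" where
  ls_hit: "lsub k (RVar k) {#t#} t"
| ls_miss: "n \<noteq> k \<Longrightarrow> lsub k (RVar n) {#} (RVar (if k < n then n - 1 else n))"
| ls_lam: "lsub (Suc k) s (image_mset (rlift 0) ts) s' \<Longrightarrow> lsub k (RLam s) ts (RLam s')"
| ls_app: "lsub k s ts1 s' \<Longrightarrow> lsub_ms k us ts2 us' \<Longrightarrow> lsub k (RApp s us) (ts1 + ts2) (RApp s' us')"
| lsm_empty: "lsub_ms k {#} {#} {#}"
| lsm_add: "lsub_ms k us ts1 us' \<Longrightarrow> lsub k u ts2 u' \<Longrightarrow>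
            lsub_ms k (add_mset u us) (ts1 + ts2) (add_mset u' us')"

definition lsubst :: "rtm \<Rightarrow> rtm multiset \<Rightarrow> rtm set" where
  "lsubst s ts = {s'. lsub 0 s ts s'}"

inductive rred :: "rtm \<Rightarrow> rtm set \<Rightarrow> bool" where
  rbase: "rred (RApp (RLam s) ts) (lsubst s ts)"
| rlam: "rred s T \<Longrightarrow> rred (RLam s) (RLam ` T)"
| rappL: "rred s T \<Longrightarrow> rred (RApp s ts) ((\<lambda>s'. RApp s' ts) ` T)"
| rappR: "rred t T \<Longrightarrow> rred (RApp s (add_mset t us)) ((\<lambda>t'. RApp s (add_mset t' us)) ` T)"

definition rsum_red :: "rtm set \<Rightarrow> rtm set \<Rightarrow> bool" where
  "rsum_red S S' \<longleftrightarrow> finite S \<and> (\<exists>s0\<in>S. \<exists>T0 T. rred s0 T0 \<and>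
      (\<forall>s\<in>S - {s0}. rred s (T s) \<or> T s = {s}) \<and>
      S' = T0 \<union> (\<Union>s\<in>S - {s0}. T s))"

definition rnormal :: "rtm set \<Rightarrow> bool" where
  "rnormal S \<longleftrightarrow> \<not> (\<exists>S'. rsum_red S S')"

text \<open>The resource normal form (well defined by confluence and weak normalisation).\<close>
definition nf_r :: "rtm \<Rightarrow> rtm set" where
  "nf_r s = (THE T. rsum_red\<^sup>*\<^sup>* {s} T \<and> rnormal T)"

inductive taylor :: "rtm \<Rightarrow> tm \<Rightarrow> bool" where
  "taylor (RVar x) (Var x)"
| "taylor s M \<Longrightarrow> taylor (RLam s) (Lam M)"
| "taylor s M \<Longrightarrow> (\<forall>t\<in>#ts. taylor t N) \<Longrightarrow> taylor (RApp s ts) (App M N)"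

definition Taylor :: "tm \<Rightarrow> rtm set" where
  "Taylor M = {s. taylor s M}"

end

theory Submission
  imports Defs
begin


lemma lsub_RVar_iff: "lsub k (RVar n) ts v \<longleftrightarrow>
   (n = k \<and> ts = {#v#}) \<or> (n \<noteq> k \<and> ts = {#} \<and> v = RVar (if k < n then n - 1 else n))"
proof
  assume "lsub k (RVar n) ts v" then show "(n = k \<and> ts = {#v#}) \<or> (n \<noteq> k \<and> ts = {#} \<and> v = RVar (if k < n then n - 1 else n))"
    by (cases rule: lsub.cases) auto
next
  assume "(n = k \<and> ts = {#v#}) \<or> (n \<noteq> k \<and> ts = {#} \<and> v = RVar (if k < n then n - 1 else n))"
  then show "lsub k (RVar n) ts v" using ls_hit ls_miss[of n k] by auto
qed

lemma lsub_RLam_iff: "lsub k (RLam s) ts v \<longleftrightarrow>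
   (\<exists>s'. v = RLam s' \<and> lsub (Suc k) s (image_mset (rlift 0) ts) s')"
  by (auto elim: lsub.cases intro: lsub_lsub_ms.intros)

lemma lsub_RApp_iff: "lsub k (RApp s us) ts v \<longleftrightarrow>
   (\<exists>ts1 ts2 s' us'. ts = ts1 + ts2 \<and> v = RApp s' us' \<and> lsub k s ts1 s' \<and> lsub_ms k us ts2 us')"
proof
  assume "lsub k (RApp s us) ts v" then show "\<exists>ts1 ts2 s' us'. ts = ts1 + ts2 \<and> v = RApp s' us' \<and> lsub k s ts1 s' \<and> lsub_ms k us ts2 us'"
    by (cases rule: lsub.cases) blast+
qed (auto intro: lsub_lsub_ms.intros)

lemma lsub_ms_empty_iff: "lsub_ms k {#} ts M \<longleftrightarrow> ts = {#} \<and> M = {#}"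
  by (auto elim: lsub_ms.cases intro: lsub_lsub_ms.intros)

lemma add_mset_eq_plus:
  assumes "add_mset x N = A + B"
  shows "(x \<in># A \<and> N = (A - {#x#}) + B) \<or> (x \<in># B \<and> N = A + (B - {#x#}))"
proof -
  have "x \<in># A + B" using assms[symmetric] by simp
  then consider "x \<in># A" | "x \<in># B" by auto
  then show ?thesis
  proof cases
    case 1
    then show ?thesis using assms by (metis add_mset_remove_trivial insert_DiffM union_mset_add_mset_left)
  next
    case 2
    then show ?thesis using assms by (metis add_mset_remove_trivial insert_DiffM union_mset_add_mset_right)
  qed
qed

lemma lsub_ms_remove:
  "lsub_ms k M ts M' \<Longrightarrow> u \<in># M \<Longrightarrow>
   \<exists>ts1 ts2 u' us'. ts = ts1 + ts2 \<and> lsub_ms k (M - {#u#}) ts1 us' \<and> lsub k u ts2 u' \<and> M' = add_mset u' us'"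
proof (induction rule: lsub_lsub_ms.inducts(2)[where ?P1.0="\<lambda>_ _ _ _. True"])
  case (lsm_add k us ts1 us' x ts2 x')
  show ?case
  proof (cases "u = x")
    case True
    then show ?thesis using lsm_add by auto
  next
    case False
    then have "u \<in># us" using lsm_add by auto
    then obtain a b u'' w where ab: "ts1 = a + b" "lsub_ms k (us - {#u#}) a w" "lsub k u b u''" "us' = add_mset u'' w"
      using lsm_add by blast
    have "lsub_ms k (add_mset x (us - {#u#})) (a + ts2) (add_mset x' w)"
      using ab lsm_add by (auto intro: lsub_lsub_ms.intros)
    moreover have "add_mset x us - {#u#} = add_mset x (us - {#u#})" using False by auto
    ultimately show ?thesis using ab
      by (rule_tac x="a + ts2" in exI, rule_tac x=b in exI, rule_tac x=u'' in exI, rule_tac x="add_mset x' w" in exI) (auto simp: ac_simps)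
  qed
qed auto

lemma lsub_ms_add_iff: "lsub_ms k (add_mset u us) ts M \<longleftrightarrow>
   (\<exists>ts1 ts2 u' us'. ts = ts1 + ts2 \<and> lsub_ms k us ts1 us' \<and> lsub k u ts2 u' \<and> M = add_mset u' us')"
  using lsub_ms_remove[of k "add_mset u us" ts M u]
  by (auto intro: lsub_lsub_ms.intros)

lemma lsub_ms_size: "lsub_ms k M ts M' \<Longrightarrow> size M' = size M"
  by (induction rule: lsub_lsub_ms.inducts(2)[where ?P1.0="\<lambda>_ _ _ _. True"]) auto

lemma lsub_ms_out_split:
  "lsub_ms k M ts M' \<Longrightarrow> M' = A + B \<Longrightarrow>
   \<exists>M1 M2 t1 t2. M = M1 + M2 \<and> ts = t1 + t2 \<and> lsub_ms k M1 t1 A \<and> lsub_ms k M2 t2 B"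
proof (induction arbitrary: A B rule: lsub_lsub_ms.inducts(2)[where ?P1.0="\<lambda>_ _ _ _. True"])
  case (lsm_empty k)
  then show ?case by (auto intro: lsub_lsub_ms.intros)
next
  case (lsm_add k us ts1 us' u ts2 u')
  from add_mset_eq_plus[OF lsm_add.prems]
  consider "u' \<in># A" "us' = (A - {#u'#}) + B" | "u' \<in># B" "us' = A + (B - {#u'#})" by blast
  then show ?case
  proof cases
    case 1
    then obtain M1 M2 t1 t2 where h: "us = M1 + M2" "ts1 = t1 + t2" "lsub_ms k M1 t1 (A - {#u'#})" "lsub_ms k M2 t2 B"
      using lsm_add.IH(1) by blast
    have "lsub_ms k (add_mset u M1) (t1 + ts2) (add_mset u' (A - {#u'#}))"
      using h lsm_add by (auto intro: lsub_lsub_ms.intros)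
    then show ?thesis using h 1
      by (rule_tac x="add_mset u M1" in exI, rule_tac x=M2 in exI, rule_tac x="t1+ts2" in exI, rule_tac x=t2 in exI) (auto simp: ac_simps)
  next
    case 2
    then obtain M1 M2 t1 t2 where h: "us = M1 + M2" "ts1 = t1 + t2" "lsub_ms k M1 t1 A" "lsub_ms k M2 t2 (B - {#u'#})"
      using lsm_add.IH(1) by blast
    have "lsub_ms k (add_mset u M2) (t2 + ts2) (add_mset u' (B - {#u'#}))"
      using h lsm_add by (auto intro: lsub_lsub_ms.intros)
    then show ?thesis using h 2
      by (rule_tac x="M1" in exI, rule_tac x="add_mset u M2" in exI, rule_tac x="t1" in exI, rule_tac x="t2+ts2" in exI) (auto simp: ac_simps)
  qed
qed auto

lemma lsub_ms_union: "lsub_ms k M1 t1 A \<Longrightarrow> lsub_ms k M2 t2 B \<Longrightarrow> lsub_ms k (M1 + M2) (t1 + t2) (A + B)"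
proof (induction M2 arbitrary: t2 B)
  case empty
  then show ?case by (simp add: lsub_ms_empty_iff)
next
  case (add x M2)
  from add.prems(2) obtain a b x' w where h: "t2 = a + b" "lsub_ms k M2 a w" "lsub k x b x'" "B = add_mset x' w"
    by (auto simp: lsub_ms_add_iff)
  have "lsub_ms k (M1 + M2) (t1 + a) (A + w)" using add.IH add.prems h by blast
  then have "lsub_ms k (add_mset x (M1 + M2)) ((t1 + a) + b) (add_mset x' (A + w))"
    using h by (auto intro: lsub_lsub_ms.intros)
  then show ?case using h by (simp add: ac_simps)
qed

lemma lsub_ms_single_iff: "lsub_ms k {#u#} ts M \<longleftrightarrow> (\<exists>u'. lsub k u ts u' \<and> M = {#u'#})"
  by (auto simp: lsub_ms_add_iff lsub_ms_empty_iff)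

lemma lsub_ms_out_empty: "lsub_ms k M ts {#} \<longleftrightarrow> M = {#} \<and> ts = {#}"
  using lsub_ms_size[of k M ts "{#}"] by (auto simp: lsub_ms_empty_iff)

lemma lsub_ms_out_single: "lsub_ms k M ts {#w#} \<longleftrightarrow> (\<exists>u. M = {#u#} \<and> lsub k u ts w)"
proof
  assume a: "lsub_ms k M ts {#w#}"
  then have "size M = 1" using lsub_ms_size by fastforce
  then obtain u where "M = {#u#}" by (metis size_1_singleton_mset)
  then show "\<exists>u. M = {#u#} \<and> lsub k u ts w" using a by (auto simp: lsub_ms_single_iff)
qed (auto simp: lsub_ms_single_iff)

lemma rlift_comm: "i \<le> j \<Longrightarrow> rlift (Suc j) (rlift i t) = rlift i (rlift j t)"
proof (induction t arbitrary: i j)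
  case (RApp s ts)
  then show ?case by (auto simp: multiset.map_comp intro!: multiset.map_cong0)
qed auto

lemma rlift_comm0: "image_mset (rlift 0) (image_mset (rlift j) ts) = image_mset (rlift (Suc j)) (image_mset (rlift 0) ts)"
  by (simp add: multiset.map_comp comp_def rlift_comm)

primrec rdown :: "nat \<Rightarrow> rtm \<Rightarrow> rtm" where
  "rdown k (RVar n) = RVar (if n < k then n else n - 1)"
| "rdown k (RLam s) = RLam (rdown (Suc k) s)"
| "rdown k (RApp s ts) = RApp (rdown k s) (image_mset (rdown k) ts)"

lemma rdown_rlift[simp]: "rdown j (rlift j t) = t"
  by (induction t arbitrary: j) (auto simp: multiset.map_comp comp_def intro: multiset.map_ident_strong)

lemma rlift_inj: "rlift j s = rlift j t \<Longrightarrow> s = t"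
  by (metis rdown_rlift)

lemma rlift_inj_iff[simp]: "rlift j s = rlift j t \<longleftrightarrow> s = t"
  using rlift_inj by blast

lemma image_rlift_inj[simp]: "image_mset (rlift j) A = image_mset (rlift j) B \<longleftrightarrow> A = B"
  by (metis (no_types, lifting) multiset.map_comp multiset.map_ident_strong comp_def rdown_rlift)


lemma image_mset_eq_single: "image_mset f M = {#x#} \<longleftrightarrow> (\<exists>y. M = {#y#} \<and> x = f y)"
proof
  assume a: "image_mset f M = {#x#}"
  then have "size M = 1" by (metis size_image_mset size_single)
  then obtain y where "M = {#y#}" by (metis size_1_singleton_mset)
  then show "\<exists>y. M = {#y#} \<and> x = f y" using a by auto
qed auto

lemma lsub_lift_hit_ms:
  assumes "\<And>x j B w. x \<in># ts \<Longrightarrow> lsub j (rlift j x) B w \<longleftrightarrow> B = {#} \<and> w = x"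
  shows "lsub_ms j (image_mset (rlift j) ts) B ws \<longleftrightarrow> B = {#} \<and> ws = ts"
  using assms
proof (induction ts arbitrary: B ws)
  case empty
  then show ?case by (simp add: lsub_ms_empty_iff)
next
  case (add x ts)
  show ?case
    apply (simp add: lsub_ms_add_iff)
    using add.IH[of _ _] add.prems by auto
qed

lemma lsub_lift_hit: "lsub j (rlift j t) B w \<longleftrightarrow> B = {#} \<and> w = t"
proof (induction t arbitrary: j B w)
  case (RVar x)
  then show ?case by (auto simp: lsub_RVar_iff)
next
  case (RLam t)
  then show ?case by (auto simp: lsub_RLam_iff)
next
  case (RApp s ts)
  show ?case
    apply (simp add: lsub_RApp_iff)
    using RApp.IH(1) lsub_lift_hit_ms[of ts j, OF RApp.IH(2)] by auto
qed

lemma lsub_lift_above: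
  shows "lsub k s ts w \<Longrightarrow> k \<le> j \<Longrightarrow> lsub k (rlift (Suc j) s) (image_mset (rlift j) ts) (rlift j w)"
    and "lsub_ms k us ts ws \<Longrightarrow> k \<le> j \<Longrightarrow>
         lsub_ms k (image_mset (rlift (Suc j)) us) (image_mset (rlift j) ts) (image_mset (rlift j) ws)"
proof (induction arbitrary: j and j rule: lsub_lsub_ms.inducts)
  case (ls_hit k t)
  then show ?case by (auto intro: lsub_lsub_ms.intros)
next
  case (ls_miss n k)
  then show ?case by (auto simp: lsub_RVar_iff)
next
  case (ls_lam k s ts s')
  then show ?case by (auto simp: lsub_RLam_iff rlift_comm0)
next
  case (ls_app k s ts1 s' us ts2 us')
  then show ?case by (auto simp: lsub_RApp_iff)
next
  case (lsm_empty k)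
  then show ?case by (auto intro: lsub_lsub_ms.intros)
next
  case (lsm_add k us ts1 us' u ts2 u')
  then show ?case by (simp add: lsub_lsub_ms.lsm_add)
qed

lemma lsub_lift_below:
  shows "lsub m s ts w \<Longrightarrow> i \<le> m \<Longrightarrow> lsub (Suc m) (rlift i s) (image_mset (rlift i) ts) (rlift i w)"
    and "lsub_ms m us ts ws \<Longrightarrow> i \<le> m \<Longrightarrow>
         lsub_ms (Suc m) (image_mset (rlift i) us) (image_mset (rlift i) ts) (image_mset (rlift i) ws)"
proof (induction arbitrary: i and i rule: lsub_lsub_ms.inducts)
  case (ls_hit k t)
  then show ?case by (auto intro: lsub_lsub_ms.intros)
next
  case (ls_miss n k)
  then show ?case by (auto simp: lsub_RVar_iff)
next
  case (ls_lam k s ts s')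
  then show ?case by (auto simp: lsub_RLam_iff rlift_comm0)
next
  case (ls_app k s ts1 s' us ts2 us')
  then show ?case by (auto simp: lsub_RApp_iff)
next
  case (lsm_empty k)
  then show ?case by (auto intro: lsub_lsub_ms.intros)
next
  case (lsm_add k us ts1 us' u ts2 u')
  then show ?case by (simp add: lsub_lsub_ms.lsm_add)
qed


lemma lsub_lift_above_anti:
  "k \<le> j \<Longrightarrow> lsub k (rlift (Suc j) s) (image_mset (rlift j) ts) w \<Longrightarrow> \<exists>w0. lsub k s ts w0 \<and> w = rlift j w0"
proof (induction s arbitrary: k j ts w)
  case (RVar n)
  show ?case
  proof (cases "n = k")
    case True
    then show ?thesis using RVar by (auto simp: lsub_RVar_iff image_mset_eq_single)
  next
    case False
    then show ?thesis using RVar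
      by (auto simp: lsub_RVar_iff split: if_splits intro!: exI[of _ "RVar (if k < n then n - 1 else n)"])
  qed
next
  case (RLam s)
  from RLam.prems obtain w' where w: "w = RLam w'"
    "lsub (Suc k) (rlift (Suc (Suc j)) s) (image_mset (rlift (Suc j)) (image_mset (rlift 0) ts)) w'"
    by (auto simp: lsub_RLam_iff rlift_comm0)
  then obtain w0 where "lsub (Suc k) s (image_mset (rlift 0) ts) w0" "w' = rlift (Suc j) w0"
    using RLam.IH[of "Suc k" "Suc j"] RLam.prems by auto
  then show ?case using w by (auto simp: lsub_RLam_iff)
next
  case (RApp s us)
  from RApp.prems obtain B1 B2 s' ws where h: "image_mset (rlift j) ts = B1 + B2" "w = RApp s' ws"
    "lsub k (rlift (Suc j) s) B1 s'" "lsub_ms k (image_mset (rlift (Suc j)) us) B2 ws"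
    by (auto simp: lsub_RApp_iff)
  then obtain C1 C2 where c: "ts = C1 + C2" "B1 = image_mset (rlift j) C1" "B2 = image_mset (rlift j) C2"
    using image_mset_eq_plusD by blast
  obtain s0 where s0: "lsub k s C1 s0" "s' = rlift j s0" using RApp.IH(1) RApp.prems h c by blast
  have "\<exists>ws0. lsub_ms k us C2 ws0 \<and> ws = image_mset (rlift j) ws0"
    if "lsub_ms k (image_mset (rlift (Suc j)) us) (image_mset (rlift j) C2) ws" "us \<subseteq># us0"
       "\<And>x C w. x \<in># us0 \<Longrightarrow> lsub k (rlift (Suc j) x) (image_mset (rlift j) C) w \<Longrightarrow> \<exists>w0. lsub k x C w0 \<and> w = rlift j w0"
     for us us0 C2 ws
    using that
  proof (induction us arbitrary: C2 ws)
    case empty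
    then show ?case by (auto simp: lsub_ms_empty_iff)
  next
    case (add x us)
    from add.prems(1) obtain D1 D2 x' ws' where d: "image_mset (rlift j) C2 = D1 + D2"
      "lsub_ms k (image_mset (rlift (Suc j)) us) D1 ws'" "lsub k (rlift (Suc j) x) D2 x'" "ws = add_mset x' ws'"
      by (auto simp: lsub_ms_add_iff)
    then obtain E1 E2 where e: "C2 = E1 + E2" "D1 = image_mset (rlift j) E1" "D2 = image_mset (rlift j) E2"
      using image_mset_eq_plusD by blast
    obtain ws0 where "lsub_ms k us E1 ws0" "ws' = image_mset (rlift j) ws0"
      using add.IH[of E1 ws'] add.prems d e by (meson mset_subset_eq_insertD subset_mset.less_imp_le)
    moreover obtain x0 where "lsub k x E2 x0" "x' = rlift j x0" using add.prems(3)[of x E2 x'] add.prems(2) d e by (metis mset_subset_eq_insertD)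
    ultimately show ?case using d e by (auto intro!: exI[of _ "add_mset x0 ws0"] intro: lsub_lsub_ms.intros)
  qed
  then obtain ws0 where "lsub_ms k us C2 ws0" "ws = image_mset (rlift j) ws0"
    using h c RApp.IH(2) RApp.prems(1) by blast
  then show ?case using s0 h c ls_app[OF s0(1)] by (auto intro!: exI[of _ "RApp s0 ws0"])
qed

lemma lsub_lift_below_anti:
  "i \<le> m \<Longrightarrow> lsub (Suc m) (rlift i s) (image_mset (rlift i) ts) w \<Longrightarrow> \<exists>w0. lsub m s ts w0 \<and> w = rlift i w0"
proof (induction s arbitrary: i m ts w)
  case (RVar n)
  show ?case
  proof (cases "n = m")
    case True
    then show ?thesis using RVar by (auto simp: lsub_RVar_iff image_mset_eq_single)
  next
    case False
    then show ?thesis using RVar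
      by (auto simp: lsub_RVar_iff split: if_splits intro!: exI[of _ "RVar (if m < n then n - 1 else n)"])
  qed
next
  case (RLam s)
  from RLam.prems obtain w' where w: "w = RLam w'"
    "lsub (Suc (Suc m)) (rlift (Suc i) s) (image_mset (rlift (Suc i)) (image_mset (rlift 0) ts)) w'"
    by (auto simp: lsub_RLam_iff rlift_comm0)
  then obtain w0 where "lsub (Suc m) s (image_mset (rlift 0) ts) w0" "w' = rlift (Suc i) w0"
    using RLam.IH[of "Suc i" "Suc m"] RLam.prems by auto
  then show ?case using w by (auto simp: lsub_RLam_iff)
next
  case (RApp s us)
  from RApp.prems obtain B1 B2 s' ws where h: "image_mset (rlift i) ts = B1 + B2" "w = RApp s' ws"
    "lsub (Suc m) (rlift i s) B1 s'" "lsub_ms (Suc m) (image_mset (rlift i) us) B2 ws"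
    by (auto simp: lsub_RApp_iff)
  then obtain C1 C2 where c: "ts = C1 + C2" "B1 = image_mset (rlift i) C1" "B2 = image_mset (rlift i) C2"
    using image_mset_eq_plusD by blast
  obtain s0 where s0: "lsub m s C1 s0" "s' = rlift i s0" using RApp.IH(1) RApp.prems h c by blast
  have "\<exists>ws0. lsub_ms m us C2 ws0 \<and> ws = image_mset (rlift i) ws0"
    if "lsub_ms (Suc m) (image_mset (rlift i) us) (image_mset (rlift i) C2) ws" "us \<subseteq># us0"
       "\<And>x C w. x \<in># us0 \<Longrightarrow> lsub (Suc m) (rlift i x) (image_mset (rlift i) C) w \<Longrightarrow> \<exists>w0. lsub m x C w0 \<and> w = rlift i w0"
     for us us0 C2 ws
    using that
  proof (induction us arbitrary: C2 ws)
    case empty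
    then show ?case by (auto simp: lsub_ms_empty_iff)
  next
    case (add x us)
    from add.prems(1) obtain D1 D2 x' ws' where d: "image_mset (rlift i) C2 = D1 + D2"
      "lsub_ms (Suc m) (image_mset (rlift i) us) D1 ws'" "lsub (Suc m) (rlift i x) D2 x'" "ws = add_mset x' ws'"
      by (auto simp: lsub_ms_add_iff)
    then obtain E1 E2 where e: "C2 = E1 + E2" "D1 = image_mset (rlift i) E1" "D2 = image_mset (rlift i) E2"
      using image_mset_eq_plusD by blast
    obtain ws0 where "lsub_ms m us E1 ws0" "ws' = image_mset (rlift i) ws0"
      using add.IH[of E1 ws'] add.prems d e by (meson mset_subset_eq_insertD subset_mset.less_imp_le)
    moreover obtain x0 where "lsub m x E2 x0" "x' = rlift i x0" using add.prems(3)[of x E2 x'] add.prems(2) d e by (metis mset_subset_eq_insertD)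
    ultimately show ?case using d e by (auto intro!: exI[of _ "add_mset x0 ws0"] intro: lsub_lsub_ms.intros)
  qed
  then obtain ws0 where "lsub_ms m us C2 ws0" "ws = image_mset (rlift i) ws0"
    using h c RApp.IH(2) RApp.prems(1) by blast
  then show ?case using s0 h c ls_app[OF s0(1)] by (auto intro!: exI[of _ "RApp s0 ws0"])
qed


lemma lsub_ms_lift_below_anti:
  "i \<le> m \<Longrightarrow> lsub_ms (Suc m) (image_mset (rlift i) us) (image_mset (rlift i) ts) ws \<Longrightarrow>
   \<exists>ws0. lsub_ms m us ts ws0 \<and> ws = image_mset (rlift i) ws0"
proof (induction us arbitrary: ts ws)
  case empty
  then show ?case by (auto simp: lsub_ms_empty_iff)
next
  case (add x us)
  from add.prems(2) obtain D1 D2 x' ws' where d: "image_mset (rlift i) ts = D1 + D2"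
    "lsub_ms (Suc m) (image_mset (rlift i) us) D1 ws'" "lsub (Suc m) (rlift i x) D2 x'" "ws = add_mset x' ws'"
    by (auto simp: lsub_ms_add_iff)
  then obtain E1 E2 where e: "ts = E1 + E2" "D1 = image_mset (rlift i) E1" "D2 = image_mset (rlift i) E2"
    using image_mset_eq_plusD by blast
  obtain ws0 where "lsub_ms m us E1 ws0" "ws' = image_mset (rlift i) ws0"
    using add.IH[of E1 ws'] add.prems d e by blast
  moreover obtain x0 where "lsub m x E2 x0" "x' = rlift i x0" using lsub_lift_below_anti[of i m x E2 x'] add.prems d e by auto
  ultimately show ?case using d e by (auto intro!: exI[of _ "add_mset x0 ws0"] intro: lsub_lsub_ms.intros)
qed

lemma subst_comp_fwd:
  "j \<le> m \<Longrightarrow> lsub (Suc m) a (image_mset (rlift j) TS1) a' \<Longrightarrow> lsub_ms m BS TS2 BS' \<Longrightarrow> lsub j a' BS' w \<Longrightarrow>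
   \<exists>u'. lsub j a BS u' \<and> lsub m u' (TS1 + TS2) w"
proof (induction a arbitrary: j m TS1 BS TS2 BS' a' w)
  case (RVar n)
  consider "n = Suc m" | "n = j" | "n \<noteq> Suc m" "n \<noteq> j" by blast
  then show ?case
  proof cases
    case 1
    then obtain t1 where t: "TS1 = {#t1#}" "a' = rlift j t1" using RVar.prems(1,2)
      by (auto simp: lsub_RVar_iff image_mset_eq_single)
    then have "BS' = {#}" "w = t1" using RVar.prems(4) by (auto simp: lsub_lift_hit)
    then have "BS = {#}" "TS2 = {#}" using RVar.prems(3) by (auto simp: lsub_ms_out_empty)
    then show ?thesis using 1 t \<open>w = t1\<close> RVar.prems(1)
      by (auto simp: lsub_RVar_iff intro!: exI[of _ "RVar m"])
  next
    case 2
    then have "TS1 = {#}" "a' = RVar j" using RVar.prems(1,2) by (auto simp: lsub_RVar_iff)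
    then have "BS' = {#w#}" using RVar.prems(4) by (auto simp: lsub_RVar_iff)
    then obtain b where "BS = {#b#}" "lsub m b TS2 w" using RVar.prems(3) by (auto simp: lsub_ms_out_single)
    then show ?thesis using 2 \<open>TS1 = {#}\<close> by (auto simp: lsub_RVar_iff)
  next
    case 3
    then have h: "TS1 = {#}" "a' = RVar (if Suc m < n then n - 1 else n)" using RVar.prems(1,2) by (auto simp: lsub_RVar_iff)
    then have "BS' = {#}" using RVar.prems(1,4) 3 by (auto simp: lsub_RVar_iff split: if_splits)
    then have "BS = {#}" "TS2 = {#}" using RVar.prems(3) by (auto simp: lsub_ms_out_empty)
    then show ?thesis using 3 h RVar.prems(1,4) \<open>BS' = {#}\<close>
      by (auto simp: lsub_RVar_iff split: if_splits intro!: exI[of _ "RVar (if j < n then n - 1 else n)"])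
  qed
next
  case (RLam b)
  from RLam.prems(2) obtain b' where b': "a' = RLam b'"
    "lsub (Suc (Suc m)) b (image_mset (rlift (Suc j)) (image_mset (rlift 0) TS1)) b'"
    by (auto simp: lsub_RLam_iff rlift_comm0)
  from RLam.prems(4) b' obtain w1 where w1: "w = RLam w1" "lsub (Suc j) b' (image_mset (rlift 0) BS') w1"
    by (auto simp: lsub_RLam_iff)
  have "lsub_ms (Suc m) (image_mset (rlift 0) BS) (image_mset (rlift 0) TS2) (image_mset (rlift 0) BS')"
    using lsub_lift_below(2)[OF RLam.prems(3)] by simp
  from RLam.IH[OF _ b'(2) this w1(2)] RLam.prems(1) obtain u1 where
    "lsub (Suc j) b (image_mset (rlift 0) BS) u1" "lsub (Suc m) u1 (image_mset (rlift 0) TS1 + image_mset (rlift 0) TS2) w1"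
    by auto
  then have "lsub j (RLam b) BS (RLam u1)" "lsub m (RLam u1) (TS1 + TS2) (RLam w1)"
    by (auto intro: lsub_lsub_ms.intros)
  then show ?case using w1 by blast
next
  case (RApp c ds)
  from RApp.prems(2) obtain A1 A2 c' ds' where h: "image_mset (rlift j) TS1 = A1 + A2" "a' = RApp c' ds'"
    "lsub (Suc m) c A1 c'" "lsub_ms (Suc m) ds A2 ds'" by (auto simp: lsub_RApp_iff)
  then obtain P1 P2 where p: "TS1 = P1 + P2" "A1 = image_mset (rlift j) P1" "A2 = image_mset (rlift j) P2"
    using image_mset_eq_plusD by blast
  from RApp.prems(4) h obtain B1 B2 w1 ws where hw: "BS' = B1 + B2" "w = RApp w1 ws" "lsub j c' B1 w1" "lsub_ms j ds' B2 ws"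
    by (auto simp: lsub_RApp_iff)
  from lsub_ms_out_split[OF RApp.prems(3) hw(1)] obtain M1 M2 Q1 Q2 where
    q: "BS = M1 + M2" "TS2 = Q1 + Q2" "lsub_ms m M1 Q1 B1" "lsub_ms m M2 Q2 B2" by blast
  obtain u1 where u1: "lsub j c M1 u1" "lsub m u1 (P1 + Q1) w1"
    using RApp.IH(1)[of j m P1 c' M1 Q1 B1 w1] RApp.prems(1) h p q hw by blast
  have ms: "\<exists>us'. lsub_ms j ds M2 us' \<and> lsub_ms m us' (P2 + Q2) ws"
    if "lsub_ms (Suc m) ds (image_mset (rlift j) P2) ds'" "lsub_ms m M2 Q2 B2" "lsub_ms j ds' B2 ws" "ds \<subseteq># ds0"
       "\<And>x P Q M B a' w. x \<in># ds0 \<Longrightarrow> lsub (Suc m) x (image_mset (rlift j) P) a' \<Longrightarrow> lsub_ms m M Q B \<Longrightarrow> lsub j a' B w \<Longrightarrow>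
          \<exists>u'. lsub j x M u' \<and> lsub m u' (P + Q) w"
    for ds ds0 P2 M2 Q2 B2 ds' ws
    using that
  proof (induction ds arbitrary: P2 M2 Q2 B2 ds' ws)
    case empty
    then show ?case by (auto simp: lsub_ms_empty_iff lsub_ms_out_empty)
  next
    case (add d ds)
    from add.prems(1) obtain X1 X2 e' d' where x: "image_mset (rlift j) P2 = X1 + X2"
      "lsub_ms (Suc m) ds X1 e'" "lsub (Suc m) d X2 d'" "ds' = add_mset d' e'" by (auto simp: lsub_ms_add_iff)
    then obtain R1 R2 where r: "P2 = R1 + R2" "X1 = image_mset (rlift j) R1" "X2 = image_mset (rlift j) R2"
      using image_mset_eq_plusD by blast
    from add.prems(3) x obtain Y1 Y2 ws0 w' where y: "B2 = Y1 + Y2" "lsub_ms j e' Y1 ws0" "lsub j d' Y2 w'" "ws = add_mset w' ws0"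
      by (auto simp: lsub_ms_add_iff)
    from lsub_ms_out_split[OF add.prems(2) y(1)] obtain N1 N2 Z1 Z2 where
      z: "M2 = N1 + N2" "Q2 = Z1 + Z2" "lsub_ms m N1 Z1 Y1" "lsub_ms m N2 Z2 Y2" by blast
    have sub: "ds \<subseteq># ds0" "d \<in># ds0" using add.prems(4) by (meson mset_subset_eq_insertD subset_mset.less_imp_le)+
    obtain us0 where us0: "lsub_ms j ds N1 us0" "lsub_ms m us0 (R1 + Z1) ws0"
      using add.IH[of R1 e' N1 Z1 Y1 ws0] x r y z sub add.prems(5) by blast
    obtain u where u: "lsub j d N2 u" "lsub m u (R2 + Z2) w'"
      using add.prems(5)[of d R2 d' N2 Z2 Y2 w'] sub x r y z by blast
    have "lsub_ms j (add_mset d ds) (N1 + N2) (add_mset u us0)" using us0 u by (auto intro: lsub_lsub_ms.intros)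
    moreover have "lsub_ms m (add_mset u us0) ((R1 + Z1) + (R2 + Z2)) (add_mset w' ws0)"
      using us0 u by (auto intro: lsub_lsub_ms.intros)
    ultimately show ?case using r z y by (auto simp: ac_simps)
  qed
  obtain us' where us': "lsub_ms j ds M2 us'" "lsub_ms m us' (P2 + Q2) ws"
    using ms[where ds0=ds and ds=ds, OF _ _ _ subset_mset.order_refl] h p q hw RApp.IH(2) RApp.prems(1) by blast
  have "lsub j (RApp c ds) (M1 + M2) (RApp u1 us')" using u1 us' by (auto intro: lsub_lsub_ms.intros)
  moreover have "lsub m (RApp u1 us') ((P1 + Q1) + (P2 + Q2)) (RApp w1 ws)" using u1 us' by (auto intro: lsub_lsub_ms.intros)
  ultimately show ?case using p q hw by (auto simp: ac_simps)
qed


lemma subst_comp_bwd: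
  "j \<le> m \<Longrightarrow> lsub j a BS u' \<Longrightarrow> lsub m u' TS w \<Longrightarrow>
   \<exists>TS1 TS2 a' BS'. TS = TS1 + TS2 \<and> lsub (Suc m) a (image_mset (rlift j) TS1) a' \<and>
      lsub_ms m BS TS2 BS' \<and> lsub j a' BS' w"
proof (induction a arbitrary: j m BS u' TS w)
  case (RVar n)
  show ?case
  proof (cases "n = j")
    case True
    then have "BS = {#u'#}" using RVar.prems by (auto simp: lsub_RVar_iff)
    moreover have "lsub (Suc m) (RVar j) {#} (RVar j)" using RVar.prems(1) ls_miss[of j "Suc m"] by auto
    moreover have "lsub j (RVar j) {#w#} w" by (rule ls_hit)
    moreover have "lsub_ms m {#u'#} TS {#w#}" using RVar.prems(3) by (simp add: lsub_ms_single_iff)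
    ultimately show ?thesis using True
      by (intro exI[of _ "{#}"] exI[of _ TS] exI[of _ "RVar j"] exI[of _ "{#w#}"]) auto
  next
    case False
    then have bs: "BS = {#}" "u' = RVar (if j < n then n - 1 else n)" using RVar.prems by (auto simp: lsub_RVar_iff)
    show ?thesis
    proof (cases "(if j < n then n - 1 else n) = m")
      case True
      then have n: "n = Suc m" using False RVar.prems(1) by (auto split: if_splits)
      have "TS = {#w#}" using RVar.prems(3) bs True by (auto simp: lsub_RVar_iff)
      moreover have "lsub (Suc m) (RVar (Suc m)) {#rlift j w#} (rlift j w)" by (rule ls_hit)
      moreover have "lsub j (rlift j w) {#} w" by (simp add: lsub_lift_hit)
      ultimately show ?thesis using n bs
        by (intro exI[of _ "{#w#}"] exI[of _ "{#}"] exI[of _ "rlift j w"] exI[of _ "{#}"])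
           (auto intro: lsub_lsub_ms.intros)
    next
      case F2: False
      then have "TS = {#}" "w = RVar (if m < (if j < n then n - 1 else n) then (if j < n then n - 1 else n) - 1 else (if j < n then n - 1 else n))"
        using RVar.prems(3) bs by (auto simp: lsub_RVar_iff)
      moreover have "n \<noteq> Suc m" using F2 False RVar.prems(1) by auto
      moreover have "lsub j (RVar (if Suc m < n then n - 1 else n)) {#} w"
        using calculation False F2 RVar.prems(1) by (auto simp: lsub_RVar_iff split: if_splits)
      ultimately show ?thesis using bs
        by (intro exI[of _ "{#}"] exI[of _ "{#}"] exI[of _ "RVar (if Suc m < n then n - 1 else n)"] exI[of _ "{#}"])
           (auto simp: lsub_RVar_iff intro: lsub_lsub_ms.intros)
    qed
  qed
next
  case (RLam b)
  from RLam.prems(2) obtain u1 where u1: "u' = RLam u1" "lsub (Suc j) b (image_mset (rlift 0) BS) u1"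
    by (auto simp: lsub_RLam_iff)
  from RLam.prems(3) u1 obtain w1 where w1: "w = RLam w1" "lsub (Suc m) u1 (image_mset (rlift 0) TS) w1"
    by (auto simp: lsub_RLam_iff)
  from RLam.IH[OF _ u1(2) w1(2)] RLam.prems(1) obtain T1 T2 b' BS'' where
    h: "image_mset (rlift 0) TS = T1 + T2" "lsub (Suc (Suc m)) b (image_mset (rlift (Suc j)) T1) b'"
       "lsub_ms (Suc m) (image_mset (rlift 0) BS) T2 BS''" "lsub (Suc j) b' BS'' w1" by auto
  then obtain TS1 TS2 where t: "TS = TS1 + TS2" "T1 = image_mset (rlift 0) TS1" "T2 = image_mset (rlift 0) TS2"
    using image_mset_eq_plusD by blast
  obtain BS' where bs': "lsub_ms m BS TS2 BS'" "BS'' = image_mset (rlift 0) BS'"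
    using lsub_ms_lift_below_anti[of 0 m BS TS2 BS''] h t by auto
  have "lsub (Suc m) (RLam b) (image_mset (rlift j) TS1) (RLam b')"
    using h t by (auto intro!: ls_lam simp: rlift_comm0)
  moreover have "lsub j (RLam b') BS' w" using h bs' w1 by (auto intro!: ls_lam)
  ultimately show ?case using t bs' by blast
next
  case (RApp c ds)
  from RApp.prems(2) obtain M1 M2 u1 us where h: "BS = M1 + M2" "u' = RApp u1 us" "lsub j c M1 u1" "lsub_ms j ds M2 us"
    by (auto simp: lsub_RApp_iff)
  from RApp.prems(3) h obtain T1 T2 w1 ws where hw: "TS = T1 + T2" "w = RApp w1 ws" "lsub m u1 T1 w1" "lsub_ms m us T2 ws"
    by (auto simp: lsub_RApp_iff)
  from RApp.IH(1)[OF RApp.prems(1) h(3) hw(3)] obtain P1 Q1 c' B1 where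
    c: "T1 = P1 + Q1" "lsub (Suc m) c (image_mset (rlift j) P1) c'" "lsub_ms m M1 Q1 B1" "lsub j c' B1 w1" by blast
  have ms: "\<exists>P2 Q2 ds' B2. T2 = P2 + Q2 \<and> lsub_ms (Suc m) es (image_mset (rlift j) P2) ds' \<and>
              lsub_ms m M2 Q2 B2 \<and> lsub_ms j ds' B2 ws"
    if "lsub_ms j es M2 us" "lsub_ms m us T2 ws" "es \<subseteq># ds"
    for es M2 us T2 ws
    using that
  proof (induction es arbitrary: M2 us T2 ws)
    case empty
    then show ?case by (auto simp: lsub_ms_empty_iff intro: lsub_lsub_ms.intros)
  next
    case (add d es)
    from add.prems(1) obtain N1 N2 us0 u where n: "M2 = N1 + N2" "lsub_ms j es N1 us0" "lsub j d N2 u" "us = add_mset u us0"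
      by (auto simp: lsub_ms_add_iff)
    from add.prems(2) n obtain Z1 Z2 ws0 w' where z: "T2 = Z1 + Z2" "lsub_ms m us0 Z1 ws0" "lsub m u Z2 w'" "ws = add_mset w' ws0"
      by (auto simp: lsub_ms_add_iff)
    have sub: "es \<subseteq># ds" "d \<in># ds" using add.prems(3) by (meson mset_subset_eq_insertD subset_mset.less_imp_le)+
    obtain P Q e' B where i: "Z1 = P + Q" "lsub_ms (Suc m) es (image_mset (rlift j) P) e'" "lsub_ms m N1 Q B" "lsub_ms j e' B ws0"
      using add.IH[OF n(2) z(2) sub(1)] by blast
    obtain P' Q' d' B'' where i2: "Z2 = P' + Q'" "lsub (Suc m) d (image_mset (rlift j) P') d'" "lsub_ms m N2 Q' B''" "lsub j d' B'' w'"
      using RApp.IH(2)[OF sub(2) RApp.prems(1) n(3) z(3)] by blast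
    have "lsub_ms (Suc m) (add_mset d es) (image_mset (rlift j) (P + P')) (add_mset d' e')"
      using i i2 by (auto intro: lsub_lsub_ms.intros)
    moreover have "lsub_ms m (N1 + N2) (Q + Q') (B + B'')" using i i2 by (simp add: lsub_ms_union)
    moreover have "lsub_ms j (add_mset d' e') (B + B'') (add_mset w' ws0)" using i i2 by (auto intro: lsub_lsub_ms.intros)
    ultimately show ?case using n z i i2
      by (intro exI[of _ "P + P'"] exI[of _ "Q + Q'"] exI[of _ "add_mset d' e'"] exI[of _ "B + B''"]) (auto simp: ac_simps)
  qed
  obtain P2 Q2 ds' B2 where d: "T2 = P2 + Q2" "lsub_ms (Suc m) ds (image_mset (rlift j) P2) ds'"
      "lsub_ms m M2 Q2 B2" "lsub_ms j ds' B2 ws"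
    using ms[OF h(4) hw(4) subset_mset.order_refl] by blast
  have "lsub (Suc m) (RApp c ds) (image_mset (rlift j) (P1 + P2)) (RApp c' ds')" using c d by (auto intro: lsub_lsub_ms.intros)
  moreover have "lsub_ms m BS (Q1 + Q2) (B1 + B2)" using c d h by (simp add: lsub_ms_union)
  moreover have "lsub j (RApp c' ds') (B1 + B2) w" using c d hw by (auto intro: lsub_lsub_ms.intros)
  ultimately show ?case using hw c d
    by (intro exI[of _ "P1 + P2"] exI[of _ "Q1 + Q2"] exI[of _ "RApp c' ds'"] exI[of _ "B1 + B2"]) (auto simp: ac_simps)
qed


lemma mset_diff_in_left: "t \<in># A \<Longrightarrow> A + B - {#t#} = (A - {#t#}) + B"
  by (simp add: diff_union_single_conv)
lemma mset_diff_in_right: "t \<in># B \<Longrightarrow> A + B - {#t#} = A + (B - {#t#})"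
  by (metis add.commute diff_union_single_conv)

lemma lsubst_lift: "lsubst (rlift (Suc j) s) (image_mset (rlift j) ts) = rlift j ` lsubst s ts"
  unfolding lsubst_def using lsub_lift_above(1)[of 0 s ts _ j] lsub_lift_above_anti[of 0 j s ts] by auto

lemma rred_lift: "rred t T \<Longrightarrow> rred (rlift j t) (rlift j ` T)"
proof (induction arbitrary: j rule: rred.induct)
  case (rbase s ts)
  then show ?case using rred.rbase[of "rlift (Suc j) s" "image_mset (rlift j) ts"] by (simp add: lsubst_lift)
next
  case (rlam s T)
  then show ?case using rred.rlam[OF rlam.IH[of "Suc j"]] by (simp add: image_image)
next
  case (rappL s T ts)
  then show ?case using rred.rappL[OF rappL.IH[of j]] by (simp add: image_image)
next
  case (rappR t T s us)
  then show ?case using rred.rappR[OF rappR.IH[of j]] by (simp add: image_image)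
qed

lemma body_red_fwd: "rred u U \<Longrightarrow> lsub k u ts v \<Longrightarrow> \<exists>V. rred v V \<and> (\<forall>v'\<in>V. \<exists>u'\<in>U. lsub k u' ts v')"
proof (induction arbitrary: k ts v rule: rred.induct)
  case (rbase s bs)
  then obtain ts1 ts2 a' bs' where h: "ts = ts1 + ts2" "v = RApp (RLam a') bs'"
    "lsub (Suc k) s (image_mset (rlift 0) ts1) a'" "lsub_ms k bs ts2 bs'"
    by (auto simp: lsub_RApp_iff lsub_RLam_iff)
  have "\<forall>w\<in>lsubst a' bs'. \<exists>u'\<in>lsubst s bs. lsub k u' ts w"
    using subst_comp_fwd[of 0 k s ts1 a' bs ts2 bs'] h unfolding lsubst_def by auto
  then show ?case using h rred.rbase by blast
next
  case (rlam s T)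
  then obtain v1 where v: "v = RLam v1" "lsub (Suc k) s (image_mset (rlift 0) ts) v1" by (auto simp: lsub_RLam_iff)
  then obtain V where "rred v1 V" "\<forall>v'\<in>V. \<exists>u'\<in>T. lsub (Suc k) u' (image_mset (rlift 0) ts) v'" using rlam.IH by blast
  then show ?case using v by (intro exI[of _ "RLam ` V"]) (auto intro: rred.rlam ls_lam)
next
  case (rappL s T us)
  then obtain ts1 ts2 v1 us' where v: "ts = ts1 + ts2" "v = RApp v1 us'" "lsub k s ts1 v1" "lsub_ms k us ts2 us'"
    by (auto simp: lsub_RApp_iff)
  then obtain V where "rred v1 V" "\<forall>v'\<in>V. \<exists>u'\<in>T. lsub k u' ts1 v'" using rappL.IH by blast
  then show ?case using v by (intro exI[of _ "(\<lambda>x. RApp x us') ` V"]) (auto intro: rred.rappL ls_app)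
next
  case (rappR t T s us)
  then obtain ts1 ts2 v1 cs where v: "ts = ts1 + ts2" "v = RApp v1 cs" "lsub k s ts1 v1" "lsub_ms k (add_mset t us) ts2 cs"
    by (auto simp: lsub_RApp_iff)
  then obtain A B cs0 c where c: "ts2 = A + B" "lsub_ms k us A cs0" "lsub k t B c" "cs = add_mset c cs0"
    by (auto simp: lsub_ms_add_iff)
  then obtain C where C: "rred c C" "\<forall>c'\<in>C. \<exists>t'\<in>T. lsub k t' B c'" using rappR.IH by blast
  have "\<forall>v'\<in>(\<lambda>c'. RApp v1 (add_mset c' cs0)) ` C. \<exists>u'\<in>(\<lambda>t'. RApp s (add_mset t' us)) ` T. lsub k u' ts v'"
  proof
    fix v' assume "v' \<in> (\<lambda>c'. RApp v1 (add_mset c' cs0)) ` C"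
    then obtain c' t' where "v' = RApp v1 (add_mset c' cs0)" "t' \<in> T" "lsub k t' B c'" using C by blast
    moreover have "lsub k (RApp s (add_mset t' us)) (ts1 + (A + B)) (RApp v1 (add_mset c' cs0))"
      using calculation v c by (auto intro: lsub_lsub_ms.intros)
    ultimately show "\<exists>u'\<in>(\<lambda>t'. RApp s (add_mset t' us)) ` T. lsub k u' ts v'" using v c by blast
  qed
  then show ?case using v c C rred.rappR by blast
qed

lemma body_red_bwd: "rred u U \<Longrightarrow> u' \<in> U \<Longrightarrow> lsub k u' ts v' \<Longrightarrow> \<exists>v V. lsub k u ts v \<and> rred v V \<and> v' \<in> V"
proof (induction arbitrary: k ts u' v' rule: rred.induct)
  case (rbase s bs)
  then have "lsub 0 s bs u'" by (simp add: lsubst_def)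
  from subst_comp_bwd[OF _ this rbase.prems(2)] obtain TS1 TS2 a' BS' where h: "ts = TS1 + TS2"
    "lsub (Suc k) s (image_mset (rlift 0) TS1) a'" "lsub_ms k bs TS2 BS'" "lsub 0 a' BS' v'" by auto
  have "lsub k (RApp (RLam s) bs) ts (RApp (RLam a') BS')" using h by (auto intro: lsub_lsub_ms.intros)
  moreover have "v' \<in> lsubst a' BS'" using h by (simp add: lsubst_def)
  ultimately show ?case using rred.rbase by blast
next
  case (rlam s T)
  then obtain x y where xy: "u' = RLam x" "x \<in> T" "v' = RLam y" "lsub (Suc k) x (image_mset (rlift 0) ts) y"
    by (auto simp: lsub_RLam_iff)
  then obtain v V where "lsub (Suc k) s (image_mset (rlift 0) ts) v" "rred v V" "y \<in> V" using rlam.IH by blast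
  then show ?case using xy by (intro exI[of _ "RLam v"] exI[of _ "RLam ` V"]) (auto intro: rred.rlam ls_lam)
next
  case (rappL s T us)
  then obtain x where x: "u' = RApp x us" "x \<in> T" by auto
  with rappL.prems obtain ts1 ts2 y ys where y: "ts = ts1 + ts2" "v' = RApp y ys" "lsub k x ts1 y" "lsub_ms k us ts2 ys"
    by (auto simp: lsub_RApp_iff)
  then obtain v V where "lsub k s ts1 v" "rred v V" "y \<in> V" using rappL.IH x by blast
  then show ?case using y by (intro exI[of _ "RApp v ys"] exI[of _ "(\<lambda>z. RApp z ys) ` V"]) (auto intro: rred.rappL ls_app)
next
  case (rappR t T s us)
  then obtain t' where t': "u' = RApp s (add_mset t' us)" "t' \<in> T" by auto
  with rappR.prems obtain ts1 ts2 y ys where y: "ts = ts1 + ts2" "v' = RApp y ys" "lsub k s ts1 y"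
    "lsub_ms k (add_mset t' us) ts2 ys" by (auto simp: lsub_RApp_iff)
  then obtain A B ys0 c' where c: "ts2 = A + B" "lsub_ms k us A ys0" "lsub k t' B c'" "ys = add_mset c' ys0"
    by (auto simp: lsub_ms_add_iff)
  then obtain c C where C: "lsub k t B c" "rred c C" "c' \<in> C" using rappR.IH t' by blast
  have "lsub k (RApp s (add_mset t us)) ts (RApp y (add_mset c ys0))" using y c C by (auto intro: lsub_lsub_ms.intros)
  moreover have "rred (RApp y (add_mset c ys0)) ((\<lambda>z. RApp y (add_mset z ys0)) ` C)" using C rred.rappR by blast
  ultimately show ?case using y c C by blast
qed


lemma image_rlift_diff: "t \<in># ts \<Longrightarrow> image_mset (rlift j) ts - {#rlift j t#} = image_mset (rlift j) (ts - {#t#})"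
  by (simp add: image_mset_Diff)

lemma bag_red_fwd:
  shows "lsub k u ms v \<Longrightarrow> t \<in># ms \<Longrightarrow> rred t T \<Longrightarrow>
           \<exists>V. rred v V \<and> (\<forall>v'\<in>V. \<exists>t'\<in>T. lsub k u (add_mset t' (ms - {#t#})) v')"
    and "lsub_ms k us ms vs \<Longrightarrow> t \<in># ms \<Longrightarrow> rred t T \<Longrightarrow>
           \<exists>c cs0 C. vs = add_mset c cs0 \<and> rred c C \<and>
              (\<forall>c'\<in>C. \<exists>t'\<in>T. lsub_ms k us (add_mset t' (ms - {#t#})) (add_mset c' cs0))"
proof (induction arbitrary: t T and t T rule: lsub_lsub_ms.inducts)
  case (ls_hit k x)
  then show ?case using lsub_lsub_ms.ls_hit by auto
next
  case (ls_miss n k)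
  then show ?case by auto
next
  case (ls_lam k s ts s')
  have "rlift 0 t \<in># image_mset (rlift 0) ts" using ls_lam.prems by auto
  from ls_lam.IH[OF this rred_lift[OF ls_lam.prems(2)]] obtain V where V: "rred s' V"
    "\<forall>v'\<in>V. \<exists>t''\<in>rlift 0 ` T. lsub (Suc k) s (add_mset t'' (image_mset (rlift 0) ts - {#rlift 0 t#})) v'" by blast
  have "\<forall>v'\<in>RLam ` V. \<exists>t'\<in>T. lsub k (RLam s) (add_mset t' (ts - {#t#})) v'"
  proof
    fix x assume "x \<in> RLam ` V"
    then obtain v' where "x = RLam v'" "v' \<in> V" by blast
    then obtain t'' where "t'' \<in> T" "lsub (Suc k) s (image_mset (rlift 0) (add_mset t'' (ts - {#t#}))) v'"
      using V(2) ls_lam.prems(1) by (auto simp: image_rlift_diff)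
    then show "\<exists>t'\<in>T. lsub k (RLam s) (add_mset t' (ts - {#t#})) x" using \<open>x = RLam v'\<close> lsub_lsub_ms.ls_lam by blast
  qed
  then show ?case using V(1) rred.rlam by blast
next
  case (ls_app k s ts1 s' us ts2 us')
  show ?case
  proof (cases "t \<in># ts1")
    case True
    from ls_app.IH(1)[OF True ls_app.prems(2)] obtain V where V: "rred s' V"
      "\<forall>v'\<in>V. \<exists>t'\<in>T. lsub k s (add_mset t' (ts1 - {#t#})) v'" by blast
    have "\<forall>v'\<in>(\<lambda>x. RApp x us') ` V. \<exists>t'\<in>T. lsub k (RApp s us) (add_mset t' (ts1 + ts2 - {#t#})) v'"
    proof
      fix v' assume "v' \<in> (\<lambda>x. RApp x us') ` V"
      then obtain x t' where x: "v' = RApp x us'" "t' \<in> T" "lsub k s (add_mset t' (ts1 - {#t#})) x" using V(2) by blast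
      have e: "add_mset t' (ts1 + ts2 - {#t#}) = add_mset t' (ts1 - {#t#}) + ts2" by (simp only: mset_diff_in_left[OF True] union_mset_add_mset_left)
      have "lsub k (RApp s us) (add_mset t' (ts1 - {#t#}) + ts2) (RApp x us')"
        by (rule lsub_lsub_ms.ls_app) (use x ls_app.hyps(2) in auto)
      then have "lsub k (RApp s us) (add_mset t' (ts1 + ts2 - {#t#})) v'" by (simp only: e x(1))
      then show "\<exists>t'\<in>T. lsub k (RApp s us) (add_mset t' (ts1 + ts2 - {#t#})) v'"
        using x(2) by blast
    qed
    then show ?thesis using V(1) rred.rappL by blast
  next
    case False
    then have t2: "t \<in># ts2" using ls_app.prems by auto
    from ls_app.IH(2)[OF t2 ls_app.prems(2)] obtain c cs0 C where C: "us' = add_mset c cs0" "rred c C"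
      "\<forall>c'\<in>C. \<exists>t'\<in>T. lsub_ms k us (add_mset t' (ts2 - {#t#})) (add_mset c' cs0)" by blast
    have "\<forall>v'\<in>(\<lambda>x. RApp s' (add_mset x cs0)) ` C. \<exists>t'\<in>T. lsub k (RApp s us) (add_mset t' (ts1 + ts2 - {#t#})) v'"
    proof
      fix v' assume "v' \<in> (\<lambda>x. RApp s' (add_mset x cs0)) ` C"
      then obtain c' t' where x: "v' = RApp s' (add_mset c' cs0)" "t' \<in> T" "lsub_ms k us (add_mset t' (ts2 - {#t#})) (add_mset c' cs0)"
        using C by blast
      have e: "add_mset t' (ts1 + ts2 - {#t#}) = ts1 + add_mset t' (ts2 - {#t#})" by (simp only: mset_diff_in_right[OF t2] union_mset_add_mset_right)
      have "lsub k (RApp s us) (ts1 + add_mset t' (ts2 - {#t#})) (RApp s' (add_mset c' cs0))"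
        by (rule lsub_lsub_ms.ls_app) (use x ls_app.hyps(1) in auto)
      then have "lsub k (RApp s us) (add_mset t' (ts1 + ts2 - {#t#})) v'" by (simp only: e x(1))
      then show "\<exists>t'\<in>T. lsub k (RApp s us) (add_mset t' (ts1 + ts2 - {#t#})) v'"
        using x(2) by blast
    qed
    then show ?thesis using C rred.rappR by blast
  qed
next
  case (lsm_empty k)
  then show ?case by auto
next
  case (lsm_add k us ts1 us' u ts2 u')
  show ?case
  proof (cases "t \<in># ts1")
    case True
    from lsm_add.IH(1)[OF True lsm_add.prems(2)] obtain c cs0 C where C: "us' = add_mset c cs0" "rred c C"
      "\<forall>c'\<in>C. \<exists>t'\<in>T. lsub_ms k us (add_mset t' (ts1 - {#t#})) (add_mset c' cs0)" by blast
    have "\<forall>c'\<in>C. \<exists>t'\<in>T. lsub_ms k (add_mset u us) (add_mset t' (ts1 + ts2 - {#t#})) (add_mset c' (add_mset u' cs0))"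
    proof
      fix c' assume "c' \<in> C"
      then obtain t' where x: "t' \<in> T" "lsub_ms k us (add_mset t' (ts1 - {#t#})) (add_mset c' cs0)" using C by blast
      have e: "add_mset t' (ts1 + ts2 - {#t#}) = add_mset t' (ts1 - {#t#}) + ts2" by (simp only: mset_diff_in_left[OF True] union_mset_add_mset_left)
      have "lsub_ms k (add_mset u us) (add_mset t' (ts1 - {#t#}) + ts2) (add_mset u' (add_mset c' cs0))"
        by (rule lsub_lsub_ms.lsm_add) (use x lsm_add.hyps(2) in auto)
      then have "lsub_ms k (add_mset u us) (add_mset t' (ts1 + ts2 - {#t#})) (add_mset c' (add_mset u' cs0))"
        by (simp only: e add_mset_commute)
      then show "\<exists>t'\<in>T. lsub_ms k (add_mset u us) (add_mset t' (ts1 + ts2 - {#t#})) (add_mset c' (add_mset u' cs0))"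
        using x(1) by blast
    qed
    then show ?thesis using C by (intro exI[of _ c] exI[of _ "add_mset u' cs0"] exI[of _ C]) auto
  next
    case False
    then have t2: "t \<in># ts2" using lsm_add.prems by auto
    from lsm_add.IH(2)[OF t2 lsm_add.prems(2)] obtain V where V: "rred u' V"
      "\<forall>v'\<in>V. \<exists>t'\<in>T. lsub k u (add_mset t' (ts2 - {#t#})) v'" by blast
    have "\<forall>c'\<in>V. \<exists>t'\<in>T. lsub_ms k (add_mset u us) (add_mset t' (ts1 + ts2 - {#t#})) (add_mset c' us')"
    proof
      fix c' assume "c' \<in> V"
      then obtain t' where x: "t' \<in> T" "lsub k u (add_mset t' (ts2 - {#t#})) c'" using V by blast
      have e: "add_mset t' (ts1 + ts2 - {#t#}) = ts1 + add_mset t' (ts2 - {#t#})" by (simp only: mset_diff_in_right[OF t2] union_mset_add_mset_right)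
      have "lsub_ms k (add_mset u us) (ts1 + add_mset t' (ts2 - {#t#})) (add_mset c' us')"
        by (rule lsub_lsub_ms.lsm_add) (use x lsm_add.hyps(1) in auto)
      then have "lsub_ms k (add_mset u us) (add_mset t' (ts1 + ts2 - {#t#})) (add_mset c' us')" by (simp only: e)
      then show "\<exists>t'\<in>T. lsub_ms k (add_mset u us) (add_mset t' (ts1 + ts2 - {#t#})) (add_mset c' us')"
        using x(1) by blast
    qed
    then show ?thesis using V by blast
  qed
qed

lemma bag_red_bwd:
  shows "lsub k u ms v' \<Longrightarrow> t' \<in># ms \<Longrightarrow> t' \<in> T \<Longrightarrow> rred t T \<Longrightarrow>
           \<exists>v V. lsub k u (add_mset t (ms - {#t'#})) v \<and> rred v V \<and> v' \<in> V"
    and "lsub_ms k us ms vs' \<Longrightarrow> t' \<in># ms \<Longrightarrow> t' \<in> T \<Longrightarrow> rred t T \<Longrightarrow>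
           \<exists>c' cs0 c C. vs' = add_mset c' cs0 \<and> lsub_ms k us (add_mset t (ms - {#t'#})) (add_mset c cs0) \<and>
              rred c C \<and> c' \<in> C"
proof (induction arbitrary: t T t' and t T t' rule: lsub_lsub_ms.inducts)
  case (ls_hit k x)
  then show ?case using lsub_lsub_ms.ls_hit[of k t] by auto
next
  case (ls_miss n k)
  then show ?case by auto
next
  case (ls_lam k s ts s')
  have "rlift 0 t' \<in># image_mset (rlift 0) ts" "rlift 0 t' \<in> rlift 0 ` T" using ls_lam.prems by auto
  from ls_lam.IH[OF this rred_lift[OF ls_lam.prems(3)]] obtain v V where
    V: "lsub (Suc k) s (add_mset (rlift 0 t) (image_mset (rlift 0) ts - {#rlift 0 t'#})) v" "rred v V" "s' \<in> V" by blast
  have "lsub (Suc k) s (image_mset (rlift 0) (add_mset t (ts - {#t'#}))) v"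
    using V(1) ls_lam.prems(1) by (simp add: image_rlift_diff)
  then have "lsub k (RLam s) (add_mset t (ts - {#t'#})) (RLam v)" by (rule lsub_lsub_ms.ls_lam)
  then show ?case using V(2,3) rred.rlam by blast
next
  case (ls_app k s ts1 s' us ts2 us')
  show ?case
  proof (cases "t' \<in># ts1")
    case True
    from ls_app.IH(1)[OF True ls_app.prems(2,3)] obtain v V where V:
      "lsub k s (add_mset t (ts1 - {#t'#})) v" "rred v V" "s' \<in> V" by blast
    have e: "add_mset t (ts1 + ts2 - {#t'#}) = add_mset t (ts1 - {#t'#}) + ts2"
      by (simp only: mset_diff_in_left[OF True] union_mset_add_mset_left)
    have "lsub k (RApp s us) (add_mset t (ts1 - {#t'#}) + ts2) (RApp v us')"
      by (rule lsub_lsub_ms.ls_app) (use V ls_app.hyps(2) in auto)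
    then have "lsub k (RApp s us) (add_mset t (ts1 + ts2 - {#t'#})) (RApp v us')" by (simp only: e)
    moreover have "rred (RApp v us') ((\<lambda>x. RApp x us') ` V)" using V rred.rappL by blast
    ultimately show ?thesis using V by blast
  next
    case False
    then have t2: "t' \<in># ts2" using ls_app.prems by auto
    from ls_app.IH(2)[OF t2 ls_app.prems(2,3)] obtain c' cs0 c C where C: "us' = add_mset c' cs0"
      "lsub_ms k us (add_mset t (ts2 - {#t'#})) (add_mset c cs0)" "rred c C" "c' \<in> C" by blast
    have e: "add_mset t (ts1 + ts2 - {#t'#}) = ts1 + add_mset t (ts2 - {#t'#})"
      by (simp only: mset_diff_in_right[OF t2] union_mset_add_mset_right)
    have "lsub k (RApp s us) (ts1 + add_mset t (ts2 - {#t'#})) (RApp s' (add_mset c cs0))"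
      by (rule lsub_lsub_ms.ls_app) (use C ls_app.hyps(1) in auto)
    then have "lsub k (RApp s us) (add_mset t (ts1 + ts2 - {#t'#})) (RApp s' (add_mset c cs0))" by (simp only: e)
    moreover have "rred (RApp s' (add_mset c cs0)) ((\<lambda>x. RApp s' (add_mset x cs0)) ` C)" using C rred.rappR by blast
    ultimately show ?thesis using C by blast
  qed
next
  case (lsm_empty k)
  then show ?case by auto
next
  case (lsm_add k us ts1 us' u ts2 u')
  show ?case
  proof (cases "t' \<in># ts1")
    case True
    from lsm_add.IH(1)[OF True lsm_add.prems(2,3)] obtain c' cs0 c C where C: "us' = add_mset c' cs0"
      "lsub_ms k us (add_mset t (ts1 - {#t'#})) (add_mset c cs0)" "rred c C" "c' \<in> C" by blast
    have e: "add_mset t (ts1 + ts2 - {#t'#}) = add_mset t (ts1 - {#t'#}) + ts2"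
      by (simp only: mset_diff_in_left[OF True] union_mset_add_mset_left)
    have "lsub_ms k (add_mset u us) (add_mset t (ts1 - {#t'#}) + ts2) (add_mset u' (add_mset c cs0))"
      by (rule lsub_lsub_ms.lsm_add) (use C lsm_add.hyps(2) in auto)
    then have "lsub_ms k (add_mset u us) (add_mset t (ts1 + ts2 - {#t'#})) (add_mset c (add_mset u' cs0))"
      by (simp only: e add_mset_commute)
    moreover have "add_mset u' us' = add_mset c' (add_mset u' cs0)" using C by (simp add: add_mset_commute)
    ultimately show ?thesis using C by blast
  next
    case False
    then have t2: "t' \<in># ts2" using lsm_add.prems by auto
    from lsm_add.IH(2)[OF t2 lsm_add.prems(2,3)] obtain v V where V:
      "lsub k u (add_mset t (ts2 - {#t'#})) v" "rred v V" "u' \<in> V" by blast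
    have e: "add_mset t (ts1 + ts2 - {#t'#}) = ts1 + add_mset t (ts2 - {#t'#})"
      by (simp only: mset_diff_in_right[OF t2] union_mset_add_mset_right)
    have "lsub_ms k (add_mset u us) (ts1 + add_mset t (ts2 - {#t'#})) (add_mset v us')"
      by (rule lsub_lsub_ms.lsm_add) (use V lsm_add.hyps(1) in auto)
    then have "lsub_ms k (add_mset u us) (add_mset t (ts1 + ts2 - {#t'#})) (add_mset v us')" by (simp only: e)
    then show ?thesis using V by blast
  qed
qed


primrec sz :: "rtm \<Rightarrow> nat" where
  "sz (RVar n) = 1"
| "sz (RLam s) = Suc (sz s)"
| "sz (RApp s ts) = Suc (sz s + sum_mset (image_mset sz ts))"

lemma sz_lift[simp]: "sz (rlift j t) = sz t"
  by (induction t arbitrary: j) (auto simp: multiset.map_comp comp_def intro!: arg_cong[where f=sum_mset] multiset.map_cong0)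

lemma sz_pos: "sz t > 0"
  by (cases t) auto

lemma lsub_sz:
  shows "lsub k s ts v \<Longrightarrow> sz v + size ts = sz s + sum_mset (image_mset sz ts)"
    and "lsub_ms k us ts vs \<Longrightarrow> sum_mset (image_mset sz vs) + size ts = sum_mset (image_mset sz us) + sum_mset (image_mset sz ts)"
proof (induction rule: lsub_lsub_ms.inducts)
  case (ls_lam k s ts s')
  then show ?case by (simp add: multiset.map_comp comp_def)
qed auto

lemma rred_sz: "rred s S \<Longrightarrow> x \<in> S \<Longrightarrow> sz x < sz s"
proof (induction arbitrary: x rule: rred.induct)
  case (rbase s ts)
  then have "lsub 0 s ts x" by (simp add: lsubst_def)
  from lsub_sz(1)[OF this] show ?case by simp
qed auto

lemma fin_sub: "finite {A. A \<subseteq># (M::'a multiset)}"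
proof -
  have "{A. A \<subseteq># M} \<subseteq> (\<Union>n\<in>{..size M}. multisets_of_size (set_mset M) n)"
    unfolding multisets_of_size_def using mset_subset_eqD size_mset_mono by fastforce
  then show ?thesis by (rule finite_subset) auto
qed

lemma fin_lsub_ms:
  assumes "\<And>x k ts. x \<in># us \<Longrightarrow> finite {v. lsub k x ts v}"
  shows "finite {vs. lsub_ms k us ts vs}"
  using assms
proof (induction us arbitrary: ts)
  case empty
  then show ?case by (simp add: lsub_ms_empty_iff)
next
  case (add u us)
  have "{vs. lsub_ms k (add_mset u us) ts vs} \<subseteq>
     (\<lambda>(x, y). add_mset x y) ` (\<Union>A\<in>{A. A \<subseteq># ts}. {x. lsub k u (ts - A) x} \<times> {y. lsub_ms k us A y})"
  proof
    fix vs assume "vs \<in> {vs. lsub_ms k (add_mset u us) ts vs}"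
    then obtain ts1 ts2 u' us' where h: "ts = ts1 + ts2" "lsub_ms k us ts1 us'" "lsub k u ts2 u'" "vs = add_mset u' us'"
      by (auto simp: lsub_ms_add_iff)
    then have "ts1 \<subseteq># ts" "ts2 = ts - ts1" by auto
    then show "vs \<in> (\<lambda>(x, y). add_mset x y) ` (\<Union>A\<in>{A. A \<subseteq># ts}. {x. lsub k u (ts - A) x} \<times> {y. lsub_ms k us A y})"
      using h by force
  qed
  moreover have "finite (\<Union>A\<in>{A. A \<subseteq># ts}. {x. lsub k u (ts - A) x} \<times> {y. lsub_ms k us A y})"
    using add by (intro finite_UN_I fin_sub finite_cartesian_product) auto
  ultimately show ?case by (meson finite_imageI finite_subset)
qed

lemma fin_lsub: "finite {v. lsub k s ts v}"
proof (induction s arbitrary: k ts)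
  case (RVar n)
  have "{v. lsub k (RVar n) ts v} \<subseteq> set_mset ts \<union> {RVar (if k < n then n - 1 else n)}"
    by (auto simp: lsub_RVar_iff)
  then show ?case by (rule finite_subset) auto
next
  case (RLam s)
  have "{v. lsub k (RLam s) ts v} \<subseteq> RLam ` {v. lsub (Suc k) s (image_mset (rlift 0) ts) v}"
    by (auto simp: lsub_RLam_iff)
  then show ?case using RLam by (meson finite_imageI finite_subset)
next
  case (RApp s us)
  have "{v. lsub k (RApp s us) ts v} \<subseteq>
     (\<lambda>(x, y). RApp x y) ` (\<Union>A\<in>{A. A \<subseteq># ts}. {x. lsub k s A x} \<times> {y. lsub_ms k us (ts - A) y})"
  proof
    fix v assume "v \<in> {v. lsub k (RApp s us) ts v}"
    then obtain ts1 ts2 s' us' where h: "ts = ts1 + ts2" "v = RApp s' us'" "lsub k s ts1 s'" "lsub_ms k us ts2 us'"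
      by (auto simp: lsub_RApp_iff)
    then have "ts1 \<subseteq># ts" "ts2 = ts - ts1" by auto
    then show "v \<in> (\<lambda>(x, y). RApp x y) ` (\<Union>A\<in>{A. A \<subseteq># ts}. {x. lsub k s A x} \<times> {y. lsub_ms k us (ts - A) y})"
      using h by force
  qed
  moreover have "finite (\<Union>A\<in>{A. A \<subseteq># ts}. {x. lsub k s A x} \<times> {y. lsub_ms k us (ts - A) y})"
    using RApp fin_lsub_ms by (intro finite_UN_I fin_sub finite_cartesian_product) auto
  ultimately show ?case by (meson finite_imageI finite_subset)
qed

lemma rred_finite: "rred s S \<Longrightarrow> finite S"
  by (induction rule: rred.induct) (auto simp: lsubst_def fin_lsub)

lemma rred_RVar[simp]: "\<not> rred (RVar n) S"
  by (auto elim: rred.cases)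

lemma rred_RLam_iff: "rred (RLam s) S \<longleftrightarrow> (\<exists>T. rred s T \<and> S = RLam ` T)"
  by (auto elim: rred.cases intro: rred.intros)

lemma rred_RApp_iff: "rred (RApp s ts) S \<longleftrightarrow>
   (\<exists>u. s = RLam u \<and> S = lsubst u ts) \<or> (\<exists>T. rred s T \<and> S = (\<lambda>s'. RApp s' ts) ` T) \<or>
   (\<exists>t us T. ts = add_mset t us \<and> rred t T \<and> S = (\<lambda>t'. RApp s (add_mset t' us)) ` T)"
proof
  assume "rred (RApp s ts) S" then show "(\<exists>u. s = RLam u \<and> S = lsubst u ts) \<or> (\<exists>T. rred s T \<and> S = (\<lambda>s'. RApp s' ts) ` T) \<or>
   (\<exists>t us T. ts = add_mset t us \<and> rred t T \<and> S = (\<lambda>t'. RApp s (add_mset t' us)) ` T)"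
    by (cases rule: rred.cases) blast+
qed (auto intro: rred.intros)


definition rnf :: "rtm \<Rightarrow> bool" where "rnf s \<longleftrightarrow> (\<forall>S. \<not> rred s S)"

inductive NFR :: "rtm \<Rightarrow> rtm set \<Rightarrow> bool" where
  nfr_nf: "rnf s \<Longrightarrow> NFR s {s}"
| nfr_red: "rred s S \<Longrightarrow> \<forall>x\<in>S. NFR x (F x) \<Longrightarrow> NFR s (\<Union>x\<in>S. F x)"

lemma NFR_ex: "\<exists>X. NFR s X"
proof (induction s rule: measure_induct_rule[where f=sz])
  case (less s)
  show ?case
  proof (cases "rnf s")
    case True
    then show ?thesis using nfr_nf by blast
  next
    case False
    then obtain S where S: "rred s S" by (auto simp: rnf_def)
    then have "\<forall>x\<in>S. \<exists>X. NFR x X" using less rred_sz by blast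
    then obtain F where "\<forall>x\<in>S. NFR x (F x)" by (metis bchoice)
    then show ?thesis using nfr_red[OF S] by blast
  qed
qed

definition nfc :: "rtm \<Rightarrow> rtm set" where "nfc s = (SOME X. NFR s X)"

lemma NFR_nfc: "NFR s (nfc s)"
  unfolding nfc_def using NFR_ex by (rule someI_ex)

definition NS :: "rtm set \<Rightarrow> rtm set" where "NS S = (\<Union>x\<in>S. nfc x)"

lemma nfr_red_img:
  assumes "inj_on f S0" "rred s (f ` S0)" "\<forall>x\<in>S0. NFR (f x) (G x)"
  shows "NFR s (\<Union>x\<in>S0. G x)"
proof -
  let ?F = "\<lambda>y. G (inv_into S0 f y)"
  have "\<forall>y\<in>f ` S0. NFR y (?F y)" using assms by auto
  from nfr_red[OF assms(2) this] have "NFR s (\<Union>y\<in>f ` S0. ?F y)" .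
  moreover have "(\<Union>y\<in>f ` S0. ?F y) = (\<Union>x\<in>S0. G x)" using assms(1) by auto
  ultimately show ?thesis by simp
qed

lemma rnf_RLam: "rnf (RLam a) \<longleftrightarrow> rnf a"
  by (auto simp: rnf_def rred_RLam_iff)

lemma ctx_lam: "NFR a X \<Longrightarrow> NFR (RLam a) (RLam ` X)"
proof (induction rule: NFR.induct)
  case (nfr_nf s)
  then show ?case using NFR.nfr_nf rnf_RLam by fastforce
next
  case (nfr_red s S F)
  have "NFR (RLam s) (\<Union>x\<in>S. RLam ` F x)"
    by (rule nfr_red_img[of RLam S]) (use nfr_red rred.rlam in \<open>auto simp: inj_on_def\<close>)
  then show ?case by (simp add: image_UN)
qed

lemma ctx_appL: "NFR a X \<Longrightarrow> NFR (RApp a ts) (\<Union>m\<in>X. nfc (RApp m ts))"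
proof (induction rule: NFR.induct)
  case (nfr_nf s)
  then show ?case using NFR_nfc by simp
next
  case (nfr_red s S F)
  have "NFR (RApp s ts) (\<Union>x\<in>S. \<Union>m\<in>F x. nfc (RApp m ts))"
    by (rule nfr_red_img[of "\<lambda>z. RApp z ts" S]) (use nfr_red rred.rappL in \<open>auto simp: inj_on_def\<close>)
  then show ?case by simp
qed

lemma ctx_appR: "NFR t X \<Longrightarrow> NFR (RApp u (add_mset t us)) (\<Union>m\<in>X. nfc (RApp u (add_mset m us)))"
proof (induction rule: NFR.induct)
  case (nfr_nf s)
  then show ?case using NFR_nfc by simp
next
  case (nfr_red s S F)
  have "NFR (RApp u (add_mset s us)) (\<Union>x\<in>S. \<Union>m\<in>F x. nfc (RApp u (add_mset m us)))"
    by (rule nfr_red_img[of "\<lambda>z. RApp u (add_mset z us)" S]) (use nfr_red rred.rappR in \<open>auto simp: inj_on_def\<close>)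
  then show ?case by simp
qed

lemma NFR_sz: "NFR x X \<Longrightarrow> y \<in> X \<Longrightarrow> sz y \<le> sz x"
  by (induction arbitrary: y rule: NFR.induct) (auto dest: rred_sz, fastforce dest: rred_sz)

lemma nfc_sz_lt: "rred x S \<Longrightarrow> y \<in> nfc x \<Longrightarrow> sz y < sz x"
proof -
  assume r: "rred x S" and y: "y \<in> nfc x"
  from NFR_nfc[of x] show ?thesis
  proof (cases rule: NFR.cases)
    case nfr_nf
    then show ?thesis using r by (auto simp: rnf_def)
  next
    case (nfr_red S' F)
    then obtain z where "z \<in> S'" "y \<in> F z" using y by auto
    then show ?thesis using nfr_red NFR_sz rred_sz by (meson order.strict_trans1)
  qed
qed

definition UB :: "nat \<Rightarrow> bool" where "UB n \<longleftrightarrow> (\<forall>x X. sz x < n \<longrightarrow> NFR x X \<longrightarrow> X = nfc x)"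

lemma UB_mono: "UB n \<Longrightarrow> m \<le> n \<Longrightarrow> UB m"
  by (auto simp: UB_def)

lemma F1: "UB n \<Longrightarrow> sz x < n \<Longrightarrow> rred x S \<Longrightarrow> nfc x = NS S"
  unfolding UB_def NS_def using nfr_red[of x S nfc] NFR_nfc by auto

lemma F3: "UB n \<Longrightarrow> sz (RApp a ts) < n \<Longrightarrow> nfc (RApp a ts) = (\<Union>m\<in>nfc a. nfc (RApp m ts))"
  unfolding UB_def using ctx_appL[OF NFR_nfc[of a], of ts] by auto

lemma F4: "UB n \<Longrightarrow> sz (RApp u (add_mset t us)) < n \<Longrightarrow>
   nfc (RApp u (add_mset t us)) = (\<Union>m\<in>nfc t. nfc (RApp u (add_mset m us)))"
  unfolding UB_def using ctx_appR[OF NFR_nfc[of t], of u us] by auto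

lemma F5: "UB n \<Longrightarrow> sz (RLam a) < n \<Longrightarrow> nfc (RLam a) = RLam ` nfc a"
  unfolding UB_def using ctx_lam[OF NFR_nfc[of a]] by auto

lemma E_bag: "UB n \<Longrightarrow> rred t T \<Longrightarrow> sz (RApp u (add_mset t us)) \<le> n \<Longrightarrow>
   NS ((\<lambda>t'. RApp u (add_mset t' us)) ` T) = (\<Union>m\<in>nfc t. nfc (RApp u (add_mset m us)))"
proof -
  assume ub: "UB n" and r: "rred t T" and s: "sz (RApp u (add_mset t us)) \<le> n"
  have "NS ((\<lambda>t'. RApp u (add_mset t' us)) ` T) = (\<Union>x\<in>T. nfc (RApp u (add_mset x us)))"
    by (simp add: NS_def)
  also have "\<dots> = (\<Union>x\<in>T. \<Union>m\<in>nfc x. nfc (RApp u (add_mset m us)))"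
  proof (rule SUP_cong[OF refl])
    fix x assume "x \<in> T"
    then have "sz x < sz t" using rred_sz r by blast
    then show "nfc (RApp u (add_mset x us)) = (\<Union>m\<in>nfc x. nfc (RApp u (add_mset m us)))"
      using F4[OF ub] s by simp
  qed
  also have "\<dots> = (\<Union>m\<in>NS T. nfc (RApp u (add_mset m us)))" by (simp add: NS_def)
  also have "NS T = nfc t" using F1[OF ub _ r] s by simp
  finally show ?thesis .
qed

lemma E_fun: "UB n \<Longrightarrow> rred u T \<Longrightarrow> sz (RApp u ts) \<le> n \<Longrightarrow>
   NS ((\<lambda>z. RApp z ts) ` T) = (\<Union>m\<in>nfc u. nfc (RApp m ts))"
proof -
  assume ub: "UB n" and r: "rred u T" and s: "sz (RApp u ts) \<le> n"
  have "NS ((\<lambda>z. RApp z ts) ` T) = (\<Union>x\<in>T. nfc (RApp x ts))"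
    by (simp add: NS_def)
  also have "\<dots> = (\<Union>x\<in>T. \<Union>m\<in>nfc x. nfc (RApp m ts))"
  proof (rule SUP_cong[OF refl])
    fix x assume "x \<in> T"
    then have "sz x < sz u" using rred_sz r by blast
    then show "nfc (RApp x ts) = (\<Union>m\<in>nfc x. nfc (RApp m ts))"
      using F3[OF ub] s by simp
  qed
  also have "\<dots> = (\<Union>m\<in>NS T. nfc (RApp m ts))" by (simp add: NS_def)
  also have "NS T = nfc u" using F1[OF ub _ r] s by simp
  finally show ?thesis .
qed


lemma lsubst_iff: "v \<in> lsubst u ts \<longleftrightarrow> lsub 0 u ts v" by (simp add: lsubst_def)

lemma CP_base_lam:
  assumes ub: "UB (sz (RApp (RLam u) ts))" and r: "rred u U"
  shows "NS (lsubst u ts) = NS ((\<lambda>z. RApp z ts) ` RLam ` U)"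
proof -
  let ?n = "sz (RApp (RLam u) ts)"
  have rhs: "NS ((\<lambda>z. RApp z ts) ` RLam ` U) = (\<Union>u'\<in>U. NS (lsubst u' ts))"
  proof -
    have "NS ((\<lambda>z. RApp z ts) ` RLam ` U) = (\<Union>u'\<in>U. nfc (RApp (RLam u') ts))" by (simp add: NS_def)
    also have "\<dots> = (\<Union>u'\<in>U. NS (lsubst u' ts))"
    proof (rule SUP_cong[OF refl])
      fix u' assume "u' \<in> U"
      then have "sz u' < sz u" using rred_sz r by blast
      then show "nfc (RApp (RLam u') ts) = NS (lsubst u' ts)" using F1[OF ub _ rred.rbase] by simp
    qed
    finally show ?thesis .
  qed
  show ?thesis unfolding rhs
  proof
    show "NS (lsubst u ts) \<subseteq> (\<Union>u'\<in>U. NS (lsubst u' ts))"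
    proof
      fix y assume "y \<in> NS (lsubst u ts)"
      then obtain v where v: "lsub 0 u ts v" "y \<in> nfc v" by (auto simp: NS_def lsubst_iff)
      from body_red_fwd[OF r v(1)] obtain V where V: "rred v V" "\<forall>v'\<in>V. \<exists>u'\<in>U. lsub 0 u' ts v'" by blast
      have "sz v < ?n" using rred_sz[OF rred.rbase, of v] v(1) by (simp add: lsubst_iff)
      then have "nfc v = NS V" using F1[OF ub _ V(1)] by simp
      then obtain v' where "v' \<in> V" "y \<in> nfc v'" using v(2) by (auto simp: NS_def)
      then show "y \<in> (\<Union>u'\<in>U. NS (lsubst u' ts))" using V(2) by (fastforce simp: NS_def lsubst_iff)
    qed
  next
    show "(\<Union>u'\<in>U. NS (lsubst u' ts)) \<subseteq> NS (lsubst u ts)"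
    proof
      fix y assume "y \<in> (\<Union>u'\<in>U. NS (lsubst u' ts))"
      then obtain u' v' where h: "u' \<in> U" "lsub 0 u' ts v'" "y \<in> nfc v'" by (auto simp: NS_def lsubst_iff)
      from body_red_bwd[OF r h(1,2)] obtain v W where W: "lsub 0 u ts v" "rred v W" "v' \<in> W" by blast
      have "sz v < ?n" using rred_sz[OF rred.rbase, of v] W(1) by (simp add: lsubst_iff)
      then have "nfc v = NS W" using F1[OF ub _ W(2)] by simp
      then have "y \<in> nfc v" using h W by (auto simp: NS_def)
      then show "y \<in> NS (lsubst u ts)" using W(1) by (auto simp: NS_def lsubst_iff)
    qed
  qed
qed

lemma CP_base_bag:
  assumes ub: "UB (sz (RApp (RLam u) (add_mset t us)))" and r: "rred t T"
  shows "NS (lsubst u (add_mset t us)) = NS ((\<lambda>t'. RApp (RLam u) (add_mset t' us)) ` T)"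
proof -
  let ?n = "sz (RApp (RLam u) (add_mset t us))"
  have rhs: "NS ((\<lambda>t'. RApp (RLam u) (add_mset t' us)) ` T) = (\<Union>t'\<in>T. NS (lsubst u (add_mset t' us)))"
  proof -
    have "NS ((\<lambda>t'. RApp (RLam u) (add_mset t' us)) ` T) = (\<Union>t'\<in>T. nfc (RApp (RLam u) (add_mset t' us)))" by (simp add: NS_def)
    also have "\<dots> = (\<Union>t'\<in>T. NS (lsubst u (add_mset t' us)))"
    proof (rule SUP_cong[OF refl])
      fix t' assume "t' \<in> T"
      then have "sz t' < sz t" using rred_sz r by blast
      then show "nfc (RApp (RLam u) (add_mset t' us)) = NS (lsubst u (add_mset t' us))" using F1[OF ub _ rred.rbase] by simp
    qed
    finally show ?thesis .
  qed
  show ?thesis unfolding rhs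
  proof
    show "NS (lsubst u (add_mset t us)) \<subseteq> (\<Union>t'\<in>T. NS (lsubst u (add_mset t' us)))"
    proof
      fix y assume "y \<in> NS (lsubst u (add_mset t us))"
      then obtain v where v: "lsub 0 u (add_mset t us) v" "y \<in> nfc v" by (auto simp: NS_def lsubst_iff)
      from bag_red_fwd(1)[OF v(1) _ r] obtain V where V: "rred v V"
        "\<forall>v'\<in>V. \<exists>t'\<in>T. lsub 0 u (add_mset t' us) v'" by auto
      have "sz v < ?n" using rred_sz[OF rred.rbase[of u "add_mset t us"], of v] v(1) unfolding lsubst_iff by blast
      then have "nfc v = NS V" using F1[OF ub _ V(1)] by simp
      then obtain v' where "v' \<in> V" "y \<in> nfc v'" using v(2) by (auto simp: NS_def)
      then show "y \<in> (\<Union>t'\<in>T. NS (lsubst u (add_mset t' us)))" using V(2) by (fastforce simp: NS_def lsubst_iff)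
    qed
  next
    show "(\<Union>t'\<in>T. NS (lsubst u (add_mset t' us))) \<subseteq> NS (lsubst u (add_mset t us))"
    proof
      fix y assume "y \<in> (\<Union>t'\<in>T. NS (lsubst u (add_mset t' us)))"
      then obtain t' v' where h: "t' \<in> T" "lsub 0 u (add_mset t' us) v'" "y \<in> nfc v'" by (auto simp: NS_def lsubst_iff)
      from bag_red_bwd(1)[OF h(2) _ h(1) r] obtain v W where W: "lsub 0 u (add_mset t us) v" "rred v W" "v' \<in> W" by auto
      have "sz v < ?n" using rred_sz[OF rred.rbase[of u "add_mset t us"], of v] W(1) unfolding lsubst_iff by blast
      then have "nfc v = NS W" using F1[OF ub _ W(2)] by simp
      then have "y \<in> nfc v" using h W by (auto simp: NS_def)
      then show "y \<in> NS (lsubst u (add_mset t us))" using W(1) by (auto simp: NS_def lsubst_iff)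
    qed
  qed
qed

lemma CP_LR:
  assumes ub: "UB (sz (RApp u (add_mset t us)))" and r1: "rred u T" and r2: "rred t T'"
  shows "NS ((\<lambda>z. RApp z (add_mset t us)) ` T) = NS ((\<lambda>t'. RApp u (add_mset t' us)) ` T')"
proof -
  let ?n = "sz (RApp u (add_mset t us))"
  have "NS ((\<lambda>z. RApp z (add_mset t us)) ` T) = (\<Union>a\<in>nfc u. nfc (RApp a (add_mset t us)))"
    using E_fun[OF ub r1] by simp
  also have "\<dots> = (\<Union>a\<in>nfc u. \<Union>m\<in>nfc t. nfc (RApp a (add_mset m us)))"
  proof (rule SUP_cong[OF refl])
    fix a assume "a \<in> nfc u"
    then have "sz a < sz u" using nfc_sz_lt r1 by blast
    then show "nfc (RApp a (add_mset t us)) = (\<Union>m\<in>nfc t. nfc (RApp a (add_mset m us)))" using F4[OF ub] by simp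
  qed
  also have "\<dots> = (\<Union>m\<in>nfc t. \<Union>a\<in>nfc u. nfc (RApp a (add_mset m us)))" by blast
  also have "\<dots> = (\<Union>m\<in>nfc t. nfc (RApp u (add_mset m us)))"
  proof (rule SUP_cong[OF refl])
    fix m assume "m \<in> nfc t"
    then have "sz m < sz t" using nfc_sz_lt r2 by blast
    then show "(\<Union>a\<in>nfc u. nfc (RApp a (add_mset m us))) = nfc (RApp u (add_mset m us))" using F3[OF ub] by simp
  qed
  also have "\<dots> = NS ((\<lambda>t'. RApp u (add_mset t' us)) ` T')" using E_bag[OF ub r2] by simp
  finally show ?thesis .
qed

lemma CP_RR:
  assumes ub: "UB (sz (RApp u (add_mset t us)))" and eq: "add_mset t us = add_mset t2 us2"
    and r1: "rred t T" and r2: "rred t2 T2"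
  shows "NS ((\<lambda>t'. RApp u (add_mset t' us)) ` T) = NS ((\<lambda>t'. RApp u (add_mset t' us2)) ` T2)"
proof (cases "t = t2")
  case True
  then have "us = us2" using eq by simp
  then show ?thesis using E_bag[OF ub r1] E_bag[OF _ r2, of "sz (RApp u (add_mset t us))" u us2] ub True by simp
next
  case False
  then obtain w where w: "us = add_mset t2 w" "us2 = add_mset t w" using eq by (auto simp: add_eq_conv_ex)
  let ?n = "sz (RApp u (add_mset t us))"
  have "NS ((\<lambda>t'. RApp u (add_mset t' us)) ` T) = (\<Union>m\<in>nfc t. nfc (RApp u (add_mset m us)))"
    using E_bag[OF ub r1] by simp
  also have "\<dots> = (\<Union>m\<in>nfc t. \<Union>m2\<in>nfc t2. nfc (RApp u (add_mset m2 (add_mset m w))))"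
  proof (rule SUP_cong[OF refl])
    fix m assume "m \<in> nfc t"
    then have "sz m < sz t" using nfc_sz_lt r1 by blast
    then show "nfc (RApp u (add_mset m us)) = (\<Union>m2\<in>nfc t2. nfc (RApp u (add_mset m2 (add_mset m w))))"
      using F4[OF ub, of u t2 "add_mset m w"] w by (simp add: add_mset_commute)
  qed
  also have "\<dots> = (\<Union>m2\<in>nfc t2. \<Union>m\<in>nfc t. nfc (RApp u (add_mset m2 (add_mset m w))))"
    by (rule SUP_commute)
  also have "\<dots> = (\<Union>m2\<in>nfc t2. nfc (RApp u (add_mset m2 us2)))"
  proof (rule SUP_cong[OF refl])
    fix m2 assume "m2 \<in> nfc t2"
    then have "sz m2 < sz t2" using nfc_sz_lt r2 by blast
    then show "(\<Union>m\<in>nfc t. nfc (RApp u (add_mset m2 (add_mset m w)))) = nfc (RApp u (add_mset m2 us2))"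
      using F4[OF ub, of u t "add_mset m2 w"] w by (simp add: add_mset_commute)
  qed
  also have "\<dots> = NS ((\<lambda>t'. RApp u (add_mset t' us2)) ` T2)"
    using E_bag[OF ub r2] eq by simp
  finally show ?thesis .
qed


lemma NS_RLam: "UB n \<Longrightarrow> sz (RLam u) \<le> n \<Longrightarrow> rred u T \<Longrightarrow> NS (RLam ` T) = RLam ` nfc u"
proof -
  assume ub: "UB n" and s: "sz (RLam u) \<le> n" and r: "rred u T"
  have "NS (RLam ` T) = (\<Union>x\<in>T. nfc (RLam x))" by (simp add: NS_def)
  also have "\<dots> = (\<Union>x\<in>T. RLam ` nfc x)"
  proof (rule SUP_cong[OF refl])
    fix x assume "x \<in> T"
    then have "sz x < sz u" using rred_sz r by blast
    then show "nfc (RLam x) = RLam ` nfc x" using F5[OF ub] s by simp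
  qed
  also have "\<dots> = RLam ` NS T" by (auto simp: NS_def)
  also have "NS T = nfc u" using F1[OF ub _ r] s by simp
  finally show ?thesis .
qed

lemma CP: "UB (sz s) \<Longrightarrow> rred s A \<Longrightarrow> rred s B \<Longrightarrow> NS A = NS B"
proof -
  assume ub: "UB (sz s)" and rA: "rred s A" and rB: "rred s B"
  from rA show ?thesis
  proof cases
    case (rbase u ts)
    from rB[unfolded rbase rred_RApp_iff] consider
      "B = lsubst u ts" | T where "rred (RLam u) T" "B = (\<lambda>s'. RApp s' ts) ` T"
      | t us T where "ts = add_mset t us" "rred t T" "B = (\<lambda>t'. RApp (RLam u) (add_mset t' us)) ` T"
      by auto
    then show ?thesis
    proof cases
      case 1 then show ?thesis using rbase by simp
    next
      case (2 T)
      then obtain U where "rred u U" "T = RLam ` U" by (auto simp: rred_RLam_iff)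
      then show ?thesis using CP_base_lam[of u ts U] ub rbase 2 by simp
    next
      case (3 t us T)
      then show ?thesis using CP_base_bag[of u t us T] ub rbase by simp
    qed
  next
    case (rlam u T)
    from rB[unfolded rlam rred_RLam_iff] obtain T' where "rred u T'" "B = RLam ` T'" by auto
    then show ?thesis using NS_RLam[OF ub _ rlam(3)] NS_RLam[OF ub _ \<open>rred u T'\<close>] rlam by simp
  next
    case (rappL u T ts)
    from rB[unfolded rappL rred_RApp_iff] consider
      w where "u = RLam w" "B = lsubst w ts" | T' where "rred u T'" "B = (\<lambda>s'. RApp s' ts) ` T'"
      | t us T' where "ts = add_mset t us" "rred t T'" "B = (\<lambda>t'. RApp u (add_mset t' us)) ` T'"
      by auto
    then show ?thesis
    proof cases
      case (1 w)
      then obtain U where "rred w U" "T = RLam ` U" using rappL by (auto simp: rred_RLam_iff)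
      then show ?thesis using CP_base_lam[of w ts U] ub rappL 1 by simp
    next
      case (2 T')
      then show ?thesis using E_fun[OF ub rappL(3)] E_fun[OF ub 2(1)] rappL by simp
    next
      case (3 t us T')
      then show ?thesis using CP_LR[of u t us T T'] ub rappL by simp
    qed
  next
    case (rappR t T u us)
    from rB[unfolded rappR rred_RApp_iff] consider
      w where "u = RLam w" "B = lsubst w (add_mset t us)" | T' where "rred u T'" "B = (\<lambda>s'. RApp s' (add_mset t us)) ` T'"
      | t2 us2 T2 where "add_mset t us = add_mset t2 us2" "rred t2 T2" "B = (\<lambda>t'. RApp u (add_mset t' us2)) ` T2"
      by blast
    then show ?thesis
    proof cases
      case (1 w)
      then show ?thesis using CP_base_bag[of w t us T] ub rappR by simp
    next
      case (2 T')
      then show ?thesis using CP_LR[of u t us T' T] ub rappR by simp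
    next
      case (3 t2 us2 T2)
      then show ?thesis using CP_RR[of u t us t2 us2 T T2] ub rappR by simp
    qed
  qed
qed

lemma NFR_eq_NS: "UB (sz x) \<Longrightarrow> NFR x X \<Longrightarrow> rred x A \<Longrightarrow> X = NS A"
proof -
  assume ub: "UB (sz x)" and n: "NFR x X" and rA: "rred x A"
  from n show ?thesis
  proof cases
    case nfr_nf
    then show ?thesis using rA by (auto simp: rnf_def)
  next
    case (nfr_red B F)
    have "\<forall>b\<in>B. F b = nfc b" using ub nfr_red rred_sz unfolding UB_def by blast
    then have "X = NS B" using nfr_red by (simp add: NS_def)
    then show ?thesis using CP[OF ub nfr_red(2) rA] by simp
  qed
qed

lemma UB_all: "UB n"
proof (induction n)
  case 0
  then show ?case by (simp add: UB_def)
next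
  case (Suc n)
  show ?case unfolding UB_def
  proof (intro allI impI)
    fix x X assume s: "sz x < Suc n" and nx: "NFR x X"
    show "X = nfc x"
    proof (cases "sz x < n")
      case True
      then show ?thesis using Suc nx unfolding UB_def by blast
    next
      case False
      then have ub: "UB (sz x)" using Suc s by (metis less_SucE)
      show ?thesis
      proof (cases "rnf x")
        case True
        have "X = {x}" using nx True by (cases rule: NFR.cases) (auto simp: rnf_def)
        moreover have "nfc x = {x}" using NFR_nfc[of x] True by (cases rule: NFR.cases) (auto simp: rnf_def)
        ultimately show ?thesis by simp
      next
        case False
        then obtain A where rA: "rred x A" by (auto simp: rnf_def)
        show ?thesis using NFR_eq_NS[OF ub nx rA] NFR_eq_NS[OF ub NFR_nfc rA] by simp
      qed
    qed
  qed
qed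

lemma nfc_red: "rred x S \<Longrightarrow> nfc x = NS S"
  using F1[OF UB_all[of "Suc (sz x)"]] by simp

lemma nfc_nf: "rnf x \<Longrightarrow> nfc x = {x}"
  using UB_all[of "Suc (sz x)"] nfr_nf[of x] unfolding UB_def by auto


lemma NS_single[simp]: "NS {x} = nfc x" by (simp add: NS_def)

lemma rsum_red_NS: "rsum_red S S' \<Longrightarrow> NS S' = NS S \<and> finite S'"
proof -
  assume a: "rsum_red S S'"
  have "finite S \<and> (\<exists>s0\<in>S. \<exists>T0 T. rred s0 T0 \<and>
      (\<forall>s\<in>S - {s0}. rred s (T s) \<or> T s = {s}) \<and> S' = T0 \<union> (\<Union>s\<in>S - {s0}. T s))"
    using a unfolding rsum_red_def .
  then obtain s0 T0 T where h: "finite S" "s0 \<in> S" "rred s0 T0" "\<forall>s\<in>S - {s0}. rred s (T s) \<or> T s = {s}"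
    "S' = T0 \<union> (\<Union>s\<in>S - {s0}. T s)" by blast
  have eq: "\<forall>s\<in>S - {s0}. NS (T s) = nfc s"
  proof
    fix s assume "s \<in> S - {s0}"
    then have "rred s (T s) \<or> T s = {s}" using h(4) by blast
    then show "NS (T s) = nfc s"
    proof
      assume "rred s (T s)" then show ?thesis using nfc_red[of s "T s"] by simp
    qed simp
  qed
  have "NS S' = NS T0 \<union> (\<Union>s\<in>S - {s0}. NS (T s))" using h(5) by (auto simp: NS_def)
  also have "\<dots> = nfc s0 \<union> (\<Union>s\<in>S - {s0}. nfc s)" using eq nfc_red[OF h(3)] by simp
  also have "\<dots> = NS S" using h(2) by (auto simp: NS_def)
  finally have "NS S' = NS S" .
  moreover have "finite S'"
  proof -
    have "\<forall>s\<in>S - {s0}. finite (T s)"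
    proof
      fix s assume "s \<in> S - {s0}"
      then have "rred s (T s) \<or> T s = {s}" using h(4) by blast
      then show "finite (T s)" using rred_finite[of s "T s"] by auto
    qed
    then show ?thesis using h(1) rred_finite[OF h(3)] h(5) by simp
  qed
  ultimately show ?thesis by simp
qed

lemma rsum_reds_NS: "rsum_red\<^sup>*\<^sup>* S S' \<Longrightarrow> finite S \<Longrightarrow> NS S' = NS S \<and> finite S'"
proof (induction rule: rtranclp_induct)
  case (step y z)
  then show ?case using rsum_red_NS[OF step(2)] by simp
qed simp

lemma rnormal_elems: "rnormal T \<Longrightarrow> finite T \<Longrightarrow> x \<in> T \<Longrightarrow> rnf x"
proof (rule ccontr)
  assume n: "rnormal T" and f: "finite T" and x: "x \<in> T" and "\<not> rnf x"
  then obtain S where S: "rred x S" by (auto simp: rnf_def)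
  have "rsum_red T (S \<union> (\<Union>s\<in>T - {x}. {s}))"
    unfolding rsum_red_def
    apply (rule conjI[OF f])
    apply (rule bexI[OF _ x])
    apply (rule exI[of _ S], rule exI[of _ "\<lambda>s. {s}"])
    using S by simp
  then show False using n by (auto simp: rnormal_def)
qed

lemma all_rnf_rnormal: "(\<forall>x\<in>T. rnf x) \<Longrightarrow> rnormal T"
  unfolding rnormal_def rsum_red_def rnf_def by blast

lemma WN_sum: "finite S \<Longrightarrow> \<exists>T. rsum_red\<^sup>*\<^sup>* S T \<and> rnormal T"
proof (induction "mset_set S" arbitrary: S rule: wf_induct_rule[OF wf_mult[OF wf_measure[of sz]]])
  case (1 S)
  show ?case
  proof (cases "\<forall>x\<in>S. rnf x")
    case True
    then show ?thesis using all_rnf_rnormal by blast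
  next
    case False
    then obtain x S0 where x: "x \<in> S" "rred x S0" by (auto simp: rnf_def)
    let ?S' = "S0 \<union> (\<Union>s\<in>S - {x}. {s})"
    have step: "rsum_red S ?S'"
      unfolding rsum_red_def
      apply (rule conjI[OF 1(2)])
      apply (rule bexI[OF _ x(1)])
      apply (rule exI[of _ S0], rule exI[of _ "\<lambda>s. {s}"])
      using x by simp
    have fS0: "finite S0" using rred_finite x by blast
    have S'eq: "?S' = (S - {x}) \<union> (S0 - (S - {x}))" by auto
    have "mset_set ?S' = mset_set (S - {x}) + mset_set (S0 - (S - {x}))"
      unfolding S'eq using 1(2) fS0 by (subst mset_set_Union) auto
    moreover have "mset_set S = mset_set (S - {x}) + {#x#}"
      using 1(2) x(1) by (metis add_mset_add_single mset_set.remove)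
    moreover have "(mset_set (S - {x}) + mset_set (S0 - (S - {x})), mset_set (S - {x}) + {#x#}) \<in> mult (measure sz)"
      by (rule one_step_implies_mult) (use fS0 rred_sz[OF x(2)] in auto)
    ultimately have "(mset_set ?S', mset_set S) \<in> mult (measure sz)" by simp
    moreover have "finite ?S'" using fS0 1(2) by auto
    ultimately obtain T where "rsum_red\<^sup>*\<^sup>* ?S' T" "rnormal T" using 1(1) by blast
    then show ?thesis using step by (meson converse_rtranclp_into_rtranclp)
  qed
qed

lemma nf_r_eq: "nf_r s = nfc s"
proof -
  obtain T where T: "rsum_red\<^sup>*\<^sup>* {s} T" "rnormal T" using WN_sum[of "{s}"] by auto
  have uniq: "T' = nfc s" if "rsum_red\<^sup>*\<^sup>* {s} T'" "rnormal T'" for T'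
  proof -
    have "NS T' = nfc s" "finite T'" using rsum_reds_NS[OF that(1)] by auto
    moreover have "\<forall>x\<in>T'. rnf x" using rnormal_elems that(2) calculation(2) by blast
    then have "NS T' = T'" using nfc_nf by (auto simp: NS_def)
    ultimately show ?thesis by simp
  qed
  show ?thesis unfolding nf_r_def
    by (rule the_equality) (use T uniq in auto)
qed

lemma nf_r_red: "rred s S \<Longrightarrow> nf_r s = (\<Union>x\<in>S. nf_r x)"
  by (simp add: nf_r_eq nfc_red NS_def)

lemma nf_r_nf: "rnf s \<Longrightarrow> nf_r s = {s}"
  by (simp add: nf_r_eq nfc_nf)


lemma tm_case_id: "(case N of Var j \<Rightarrow> Var j | Lam P \<Rightarrow> Lam P | App P Q \<Rightarrow> App P Q) = N"
  by (cases N) auto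

lemma lift_simps[simp]:
  "lift k (Var n) = Var (if n < k then n else Suc n)"
  "lift k (Lam P) = Lam (lift (Suc k) P)"
  "lift k (App P Q) = App (lift k P) (lift k Q)"
  by (subst lift.code; simp)+

lemma subst_simps[simp]:
  "subst k N (Var n) = (if n = k then N else Var (if k < n then n - 1 else n))"
  "subst k N (Lam P) = Lam (subst (Suc k) (lift 0 N) P)"
  "subst k N (App P Q) = App (subst k N P) (subst k N Q)"
  by (subst subst.code; simp add: tm_case_id)+

lemma taylor_RVar: "taylor (RVar x) M \<longleftrightarrow> M = Var x"
  by (auto elim: taylor.cases intro: taylor.intros)
lemma taylor_RLam: "taylor (RLam s) M \<longleftrightarrow> (\<exists>P. M = Lam P \<and> taylor s P)"
  by (auto elim: taylor.cases intro: taylor.intros)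
lemma taylor_RApp: "taylor (RApp s ts) M \<longleftrightarrow> (\<exists>P Q. M = App P Q \<and> taylor s P \<and> (\<forall>t\<in>#ts. taylor t Q))"
  by (auto elim: taylor.cases intro: taylor.intros)

lemma taylor_lift: "taylor t N \<Longrightarrow> taylor (rlift j t) (lift j N)"
  by (induction arbitrary: j rule: taylor.induct) (auto simp: taylor_RVar taylor_RLam taylor_RApp)

lemma taylor_lift_anti: "taylor t (lift j N) \<Longrightarrow> \<exists>t0. taylor t0 N \<and> t = rlift j t0"
proof (induction t arbitrary: j N)
  case (RVar x)
  then show ?case by (cases N) (auto simp: taylor_RVar intro!: exI[of _ "RVar (case N of Var y \<Rightarrow> y)"] taylor.intros)
next
  case (RLam s)
  then obtain P where "N = Lam P" "taylor s (lift (Suc j) P)" by (cases N) (auto simp: taylor_RLam)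
  moreover from RLam.IH[OF this(2)] obtain t0 where "taylor t0 P" "s = rlift (Suc j) t0" by blast
  ultimately show ?case by (intro exI[of _ "RLam t0"]) (auto simp: taylor_RLam)
next
  case (RApp s ts)
  then obtain P Q where h: "N = App P Q" "taylor s (lift j P)" "\<forall>t\<in>#ts. taylor t (lift j Q)"
    by (cases N) (auto simp: taylor_RApp)
  obtain s0 where s0: "taylor s0 P" "s = rlift j s0" using RApp.IH(1) h by blast
  have "\<forall>t\<in>#ts. \<exists>t0. taylor t0 Q \<and> t = rlift j t0" using RApp.IH(2) h by blast
  then obtain g where g: "\<forall>t\<in>#ts. taylor (g t) Q \<and> t = rlift j (g t)" by metis
  have "image_mset (rlift j) (image_mset g ts) = ts"
    using g by (simp add: multiset.map_comp comp_def multiset.map_ident_strong)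
  then show ?case using h s0 g by (intro exI[of _ "RApp s0 (image_mset g ts)"]) (auto simp: taylor_RApp)
qed

lemma taylor_subst:
  shows "lsub k s ts v \<Longrightarrow> taylor s M \<Longrightarrow> (\<forall>t\<in>#ts. taylor t N) \<Longrightarrow> taylor v (subst k N M)"
    and "lsub_ms k us ts vs \<Longrightarrow> (\<forall>u\<in>#us. taylor u M) \<Longrightarrow> (\<forall>t\<in>#ts. taylor t N) \<Longrightarrow> (\<forall>v\<in>#vs. taylor v (subst k N M))"
proof (induction arbitrary: M N and M N rule: lsub_lsub_ms.inducts)
  case (ls_hit k t)
  then show ?case by (auto simp: taylor_RVar)
next
  case (ls_miss n k)
  then show ?case by (auto simp: taylor_RVar)
next
  case (ls_lam k s ts s')
  then show ?case by (auto simp: taylor_RLam taylor_lift)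
next
  case (ls_app k s ts1 s' us ts2 us')
  then show ?case by (auto simp: taylor_RApp)
next
  case (lsm_empty k)
  then show ?case by auto
next
  case (lsm_add k us ts1 us' u ts2 u')
  then show ?case by auto
qed

lemma taylor_subst_anti: "taylor v (subst k N M) \<Longrightarrow> \<exists>s ts. taylor s M \<and> (\<forall>t\<in>#ts. taylor t N) \<and> lsub k s ts v"
proof (induction v arbitrary: k N M)
  case (RVar x)
  show ?case
  proof (cases M)
    case (Var n)
    show ?thesis
    proof (cases "n = k")
      case True
      then show ?thesis using RVar Var by (intro exI[of _ "RVar k"] exI[of _ "{#RVar x#}"]) (auto simp: taylor_RVar intro: lsub_lsub_ms.intros)
    next
      case False
      then show ?thesis using RVar Var by (intro exI[of _ "RVar n"] exI[of _ "{#}"]) (auto simp: taylor_RVar lsub_RVar_iff)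
    qed
  qed (use RVar in \<open>auto simp: taylor_RVar\<close>)
next
  case (RLam v1)
  show ?case
  proof (cases M)
    case (Var n)
    then show ?thesis using RLam by (intro exI[of _ "RVar k"] exI[of _ "{#RLam v1#}"]) (auto simp: taylor_RVar taylor_RLam split: if_splits intro: lsub_lsub_ms.intros)
  next
    case (Lam P)
    then have "taylor v1 (subst (Suc k) (lift 0 N) P)" using RLam.prems by (auto simp: taylor_RLam)
    from RLam.IH[OF this] obtain s ts where h: "taylor s P" "\<forall>t\<in>#ts. taylor t (lift 0 N)" "lsub (Suc k) s ts v1" by blast
    then have "\<forall>t\<in>#ts. \<exists>t0. taylor t0 N \<and> t = rlift 0 t0" using taylor_lift_anti by blast
    then obtain g where g: "\<forall>t\<in>#ts. taylor (g t) N \<and> t = rlift 0 (g t)" by metis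
    have "image_mset (rlift 0) (image_mset g ts) = ts"
      using g by (simp add: multiset.map_comp comp_def multiset.map_ident_strong)
    then have "lsub k (RLam s) (image_mset g ts) (RLam v1)" using h(3) by (auto intro: lsub_lsub_ms.intros)
    then show ?thesis using Lam h g by (intro exI[of _ "RLam s"] exI[of _ "image_mset g ts"]) (auto simp: taylor_RLam)
  next
    case (App P Q)
    then show ?thesis using RLam by (auto simp: taylor_RLam)
  qed
next
  case (RApp a bs)
  show ?case
  proof (cases M)
    case (Var n)
    then show ?thesis using RApp by (intro exI[of _ "RVar k"] exI[of _ "{#RApp a bs#}"]) (auto simp: taylor_RVar taylor_RApp split: if_splits intro: lsub_lsub_ms.intros)
  next
    case (Lam P)
    then show ?thesis using RApp by (auto simp: taylor_RApp)
  next
    case (App P Q)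
    then have ha: "taylor a (subst k N P)" and hb: "\<forall>b\<in>#bs. taylor b (subst k N Q)" using RApp.prems by (auto simp: taylor_RApp)
    from RApp.IH(1)[OF ha] obtain s ts where s: "taylor s P" "\<forall>t\<in>#ts. taylor t N" "lsub k s ts a" by blast
    have "\<forall>b\<in>#bs. \<exists>sb tsb. taylor sb Q \<and> (\<forall>t\<in>#tsb. taylor t N) \<and> lsub k sb tsb b"
      using RApp.IH(2) hb by blast
    then obtain f g where fg: "\<forall>b\<in>#bs. taylor (f b) Q \<and> (\<forall>t\<in>#g b. taylor t N) \<and> lsub k (f b) (g b) b" by metis
    have ms: "lsub_ms k (image_mset f B) (sum_mset (image_mset g B)) B" if "B \<subseteq># bs" for B
      using that
    proof (induction B)
      case empty
      then show ?case by (auto intro: lsub_lsub_ms.intros)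
    next
      case (add b B)
      then have "lsub_ms k (image_mset f B) (sum_mset (image_mset g B)) B" "lsub k (f b) (g b) b"
        using fg by (auto dest: mset_subset_eq_insertD subset_mset.less_imp_le)
      then show ?case using lsub_lsub_ms.lsm_add[of k "image_mset f B" "sum_mset (image_mset g B)" B "f b" "g b" b]
        by (simp add: add.commute)
    qed
    have "lsub k (RApp s (image_mset f bs)) (ts + sum_mset (image_mset g bs)) (RApp a bs)"
      using s ms[OF subset_mset.order_refl] by (auto intro: lsub_lsub_ms.intros)
    moreover have "taylor (RApp s (image_mset f bs)) M" using App s fg by (auto simp: taylor_RApp)
    moreover have "\<forall>t\<in>#ts + sum_mset (image_mset g bs). taylor t N" using s fg by auto
    ultimately show ?thesis by blast
  qed
qed


lemma taylor_Var: "taylor s (Var x) \<longleftrightarrow> s = RVar x"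
  by (auto elim: taylor.cases intro: taylor.intros)
lemma taylor_Lam: "taylor s (Lam P) \<longleftrightarrow> (\<exists>u. s = RLam u \<and> taylor u P)"
  by (auto elim: taylor.cases intro: taylor.intros)
lemma taylor_App: "taylor s (App P Q) \<longleftrightarrow> (\<exists>a ts. s = RApp a ts \<and> taylor a P \<and> (\<forall>t\<in>#ts. taylor t Q))"
  by (auto elim: taylor.cases intro: taylor.intros)

definition R1 :: "rtm \<Rightarrow> rtm \<Rightarrow> bool" where "R1 x y \<longleftrightarrow> (\<exists>S. rred x S \<and> y \<in> S)"

lemma R1_lam: "R1\<^sup>*\<^sup>* a b \<Longrightarrow> R1\<^sup>*\<^sup>* (RLam a) (RLam b)"
proof (induction rule: rtranclp_induct)
  case (step y z)
  then have "R1 (RLam y) (RLam z)" unfolding R1_def using rred.rlam by blast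
  then show ?case using step by (meson rtranclp.rtrancl_into_rtrancl)
qed simp

lemma R1_appL: "R1\<^sup>*\<^sup>* a b \<Longrightarrow> R1\<^sup>*\<^sup>* (RApp a ts) (RApp b ts)"
proof (induction rule: rtranclp_induct)
  case (step y z)
  then have "R1 (RApp y ts) (RApp z ts)" unfolding R1_def using rred.rappL by blast
  then show ?case using step by (meson rtranclp.rtrancl_into_rtrancl)
qed simp

lemma R1_appR: "R1\<^sup>*\<^sup>* a b \<Longrightarrow> R1\<^sup>*\<^sup>* (RApp s (add_mset a us)) (RApp s (add_mset b us))"
proof (induction rule: rtranclp_induct)
  case (step y z)
  then have "R1 (RApp s (add_mset y us)) (RApp s (add_mset z us))" unfolding R1_def using rred.rappR by blast
  then show ?case using step by (meson rtranclp.rtrancl_into_rtrancl)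
qed simp

lemma R1_nf: "R1\<^sup>*\<^sup>* x y \<Longrightarrow> nf_r y \<subseteq> nf_r x"
proof (induction rule: rtranclp_induct)
  case (step y z)
  then obtain S where "rred y S" "z \<in> S" by (auto simp: R1_def)
  then have "nf_r z \<subseteq> nf_r y" using nf_r_red by blast
  then show ?case using step by blast
qed simp

lemma beta_pull: "beta M M' \<Longrightarrow> taylor s' M' \<Longrightarrow> \<exists>s. taylor s M \<and> R1\<^sup>*\<^sup>* s s'"
proof (induction arbitrary: s' rule: beta.induct)
  case (redex M N)
  then have "taylor s' (subst 0 N M)" by (simp add: subst0_def)
  from taylor_subst_anti[OF this] obtain s0 ts where h: "taylor s0 M" "\<forall>t\<in>#ts. taylor t N" "lsub 0 s0 ts s'" by blast
  have "R1 (RApp (RLam s0) ts) s'" unfolding R1_def using rred.rbase h(3) by (auto simp: lsubst_def)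
  moreover have "taylor (RApp (RLam s0) ts) (App (Lam M) N)" using h by (auto simp: taylor_RApp taylor_RLam)
  ultimately show ?case by blast
next
  case (lam M M')
  then obtain x where x: "s' = RLam x" "taylor x M'" by (auto simp: taylor_Lam)
  then obtain x0 where "taylor x0 M" "R1\<^sup>*\<^sup>* x0 x" using lam.IH by blast
  then have "taylor (RLam x0) (Lam M)" "R1\<^sup>*\<^sup>* (RLam x0) (RLam x)" using R1_lam by (auto simp: taylor_RLam)
  then show ?case using x by blast
next
  case (appL M M' N)
  then obtain a ts where h: "s' = RApp a ts" "taylor a M'" "\<forall>t\<in>#ts. taylor t N" by (auto simp: taylor_App)
  then obtain a0 where "taylor a0 M" "R1\<^sup>*\<^sup>* a0 a" using appL.IH by blast
  then have "taylor (RApp a0 ts) (App M N)" "R1\<^sup>*\<^sup>* (RApp a0 ts) (RApp a ts)" using h R1_appL by (auto simp: taylor_RApp)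
  then show ?case using h by blast
next
  case (appR N N' M)
  then obtain a bs where h: "s' = RApp a bs" "taylor a M" "\<forall>b\<in>#bs. taylor b N'" by (auto simp: taylor_App)
  then have "\<forall>b\<in>#bs. \<exists>b0. taylor b0 N \<and> R1\<^sup>*\<^sup>* b0 b" using appR.IH by blast
  then obtain g where g: "\<forall>b\<in>#bs. taylor (g b) N \<and> R1\<^sup>*\<^sup>* (g b) b" by metis
  have gen: "R1\<^sup>*\<^sup>* (RApp a (C + image_mset g B)) (RApp a (C + B))" if "B \<subseteq># bs" for B C
    using that
  proof (induction B arbitrary: C)
    case empty
    then show ?case by simp
  next
    case (add b B)
    have b: "R1\<^sup>*\<^sup>* (g b) b" and B: "B \<subseteq># bs" using add.prems g by (auto dest: mset_subset_eq_insertD subset_mset.less_imp_le)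
    have "R1\<^sup>*\<^sup>* (RApp a (add_mset (g b) (C + image_mset g B))) (RApp a (add_mset b (C + image_mset g B)))"
      using R1_appR[OF b] by blast
    moreover have "R1\<^sup>*\<^sup>* (RApp a ((C + {#b#}) + image_mset g B)) (RApp a ((C + {#b#}) + B))"
      using add.IH[OF B] by blast
    ultimately show ?case by (simp add: ac_simps)
  qed
  have "R1\<^sup>*\<^sup>* (RApp a (image_mset g bs)) (RApp a bs)" using gen[of bs "{#}"] by simp
  moreover have "taylor (RApp a (image_mset g bs)) (App M N)" using h g by (auto simp: taylor_RApp)
  ultimately show ?case using h by blast
qed

lemma beta_star_pull: "beta\<^sup>*\<^sup>* M M' \<Longrightarrow> taylor s' M' \<Longrightarrow> \<exists>s. taylor s M \<and> R1\<^sup>*\<^sup>* s s'"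
proof (induction arbitrary: s' rule: rtranclp_induct)
  case (step y z)
  from beta_pull[OF step(2) step(4)] obtain s1 where "taylor s1 y" "R1\<^sup>*\<^sup>* s1 s'" by blast
  moreover from step(3)[OF this(1)] obtain s where "taylor s M" "R1\<^sup>*\<^sup>* s s1" by blast
  ultimately show ?case by (meson rtranclp_trans)
qed blast

lemma hred_sim: "hred M M' \<Longrightarrow> taylor s M \<Longrightarrow> \<exists>S. rred s S \<and> (\<forall>x\<in>S. taylor x M')"
proof (induction arbitrary: s rule: hred.induct)
  case (hredex N P)
  then obtain u ts where h: "s = RApp (RLam u) ts" "taylor u N" "\<forall>t\<in>#ts. taylor t P" by (auto simp: taylor_App taylor_Lam)
  have "\<forall>x\<in>lsubst u ts. taylor x (subst0 N P)"
    using taylor_subst(1)[of 0 u ts _ N P] h by (auto simp: lsubst_def subst0_def)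
  then show ?case using h rred.rbase by blast
next
  case (hlam M M')
  then obtain u where "s = RLam u" "taylor u M" by (auto simp: taylor_Lam)
  moreover then obtain S where "rred u S" "\<forall>x\<in>S. taylor x M'" using hlam.IH by blast
  ultimately have "rred s (RLam ` S)" "\<forall>x\<in>RLam ` S. taylor x (Lam M')" using rred.rlam by (auto simp: taylor_RLam)
  then show ?case by blast
next
  case (happ P P' Q)
  then obtain a ts where h: "s = RApp a ts" "taylor a P" "\<forall>t\<in>#ts. taylor t Q" by (auto simp: taylor_App)
  then obtain S where "rred a S" "\<forall>x\<in>S. taylor x P'" using happ.IH by blast
  then have "rred s ((\<lambda>z. RApp z ts) ` S)" "\<forall>x\<in>(\<lambda>z. RApp z ts) ` S. taylor x (App P' Q)"
    using h rred.rappL by (auto simp: taylor_RApp)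
  then show ?case by blast
qed

lemma hvs_hnf: "head_var_spine M \<Longrightarrow> hnf M" by (rule hnf.intros)

lemma hnf_App: "hnf (App P Q) \<longleftrightarrow> head_var_spine (App P Q)"
  by (auto elim: hnf.cases intro: hnf.intros)
lemma hnf_Var: "hnf (Var x)"
  by (auto intro: hnf.intros head_var_spine.intros)

lemma hvs_Lam[simp]: "\<not> head_var_spine (Lam P)"
  by (auto elim: head_var_spine.cases)

lemma hvs_App: "head_var_spine (App P Q) \<longleftrightarrow> head_var_spine P"
  by (auto elim: head_var_spine.cases intro: head_var_spine.intros)

lemma hred_ex: "taylor s M \<Longrightarrow> \<not> hnf M \<Longrightarrow> \<exists>M'. hred M M'"
proof (induction rule: taylor.induct)
  case (1 x)
  then show ?case using hnf_Var by blast
next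
  case (2 s M)
  then have "\<not> hnf M" using hnf.intros(2) by blast
  then show ?case using 2 hred.hlam by blast
next
  case (3 s M ts N)
  show ?case
  proof (cases M)
    case (Lam P)
    then show ?thesis using hred.hredex by blast
  next
    case (Var x)
    then have "hnf (App M N)" by (simp add: hnf_App hvs_App head_var_spine.intros)
    then show ?thesis using 3 by blast
  next
    case (App P Q)
    have "\<not> hnf M"
    proof
      assume "hnf M"
      then have "head_var_spine M" using App by (simp add: hnf_App)
      then have "hnf (App M N)" by (simp add: hnf_App hvs_App)
      then show False using 3 by blast
    qed
    then obtain M' where "hred M M'" using 3 by blast
    then show ?thesis using App hred.happ[of M M' N] by auto
  qed
qed

lemma hnf_skel: "hnf N \<Longrightarrow> \<exists>s. taylor s N \<and> rnf s"
proof (induction rule: hnf.induct)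
  case (1 M)
  have "\<exists>s. taylor s M \<and> rnf s \<and> (\<forall>u. s \<noteq> RLam u)" using 1
  proof (induction rule: head_var_spine.induct)
    case (1 y)
    have "taylor (RVar y) (Var y)" by (simp add: taylor_RVar)
    then show ?case by (intro exI[of _ "RVar y"]) (auto simp: rnf_def)
  next
    case (2 P Q)
    then obtain s where s: "taylor s P" "rnf s" "\<forall>u. s \<noteq> RLam u" by blast
    have "rnf (RApp s {#})" using s by (auto simp: rnf_def rred_RApp_iff)
    then show ?case using s by (intro exI[of _ "RApp s {#}"]) (auto simp: taylor_RApp)
  qed
  then show ?case by blast
next
  case (2 M)
  then obtain s where "taylor s M" "rnf s" by blast
  then show ?case by (intro exI[of _ "RLam s"]) (auto simp: taylor_RLam rnf_RLam)
qed

lemma beta_hnf_taylor: "beta\<^sup>*\<^sup>* M N \<Longrightarrow> hnf N \<Longrightarrow> \<exists>s. taylor s M \<and> nf_r s \<noteq> {}"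
proof -
  assume b: "beta\<^sup>*\<^sup>* M N" and h: "hnf N"
  obtain s0 where s0: "taylor s0 N" "rnf s0" using hnf_skel[OF h] by blast
  obtain s where s: "taylor s M" "R1\<^sup>*\<^sup>* s s0" using beta_star_pull[OF b s0(1)] by blast
  have "nf_r s0 \<subseteq> nf_r s" using R1_nf[OF s(2)] .
  moreover have "nf_r s0 = {s0}" using nf_r_nf[OF s0(2)] .
  ultimately show ?thesis using s by blast
qed

lemma taylor_head_norm: "taylor s M \<Longrightarrow> nf_r s \<noteq> {} \<Longrightarrow> \<exists>N. hred\<^sup>*\<^sup>* M N \<and> hnf N"
proof (induction s arbitrary: M rule: measure_induct_rule[where f=sz])
  case (less s)
  show ?case
  proof (cases "hnf M")
    case True
    then show ?thesis by blast
  next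
    case False
    then obtain M' where hr: "hred M M'" using hred_ex less.prems by blast
    from hred_sim[OF hr less.prems(1)] obtain S where S: "rred s S" "\<forall>x\<in>S. taylor x M'" by blast
    have "nf_r s = (\<Union>x\<in>S. nf_r x)" using nf_r_red[OF S(1)] .
    then obtain x where x: "x \<in> S" "nf_r x \<noteq> {}" using less.prems(2) by auto
    have "sz x < sz s" using rred_sz S(1) x(1) by blast
    then obtain N where "hred\<^sup>*\<^sup>* M' N" "hnf N" using less.IH x S(2) by blast
    then show ?thesis using hr by (meson converse_rtranclp_into_rtranclp)
  qed
qed


lemma subterm_at_append: "subterm_at M (p @ q) = (case subterm_at M p of None \<Rightarrow> None | Some X \<Rightarrow> subterm_at X q)"
proof (induction p arbitrary: M)
  case (Cons d ps)
  show ?case by (cases d; cases M) (auto simp: Cons)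
qed simp

lemma subterm_at_Var_Cons[simp]: "subterm_at (Var x) (d # ds) = None"
  by (cases d) auto

definition path :: "tm \<Rightarrow> (nat \<Rightarrow> dir) \<Rightarrow> bool" where
  "path M f \<longleftrightarrow> (\<forall>n. subterm_at M (map f [0..<n]) \<noteq> None)"

definition infA :: "(nat \<Rightarrow> dir) \<Rightarrow> bool" where
  "infA f \<longleftrightarrow> (\<forall>n. \<exists>m\<ge>n. f m = DArg)"

lemma Lambda001_path: "M \<in> Lambda001 \<longleftrightarrow> (\<forall>f. path M f \<longrightarrow> infA f)"
  by (simp add: Lambda001_def path_def infA_def)

lemma infA_shift: "infA (\<lambda>n. f (Suc n)) \<longleftrightarrow> infA f"
proof
  assume a: "infA (\<lambda>n. f (Suc n))"
  show "infA f" unfolding infA_def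
  proof
    fix n
    obtain m where "m \<ge> n" "f (Suc m) = DArg" using a unfolding infA_def by blast
    then show "\<exists>m\<ge>n. f m = DArg" by (intro exI[of _ "Suc m"]) auto
  qed
next
  assume a: "infA f"
  show "infA (\<lambda>n. f (Suc n))" unfolding infA_def
  proof
    fix n
    obtain m where m: "m \<ge> Suc n" "f m = DArg" using a unfolding infA_def by blast
    then obtain m' where "m = Suc m'" by (cases m) auto
    then show "\<exists>m\<ge>n. f (Suc m) = DArg" using m by (intro exI[of _ m']) auto
  qed
qed

lemma map_upt_Suc0: "map f [0..<Suc n] = f 0 # map (\<lambda>i. f (Suc i)) [0..<n]"
  by (induction n) auto

lemma path_Cons: "path M f \<longleftrightarrow> (\<exists>X. subterm_at M [f 0] = Some X \<and> path X (\<lambda>n. f (Suc n)))"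
proof -
  have eq: "subterm_at M (map f [0..<Suc n]) = (case subterm_at M [f 0] of None \<Rightarrow> None | Some X \<Rightarrow> subterm_at X (map (\<lambda>i. f (Suc i)) [0..<n]))" for n
  proof -
    have "subterm_at M (map f [0..<Suc n]) = subterm_at M ([f 0] @ map (\<lambda>i. f (Suc i)) [0..<n])"
      by (simp only: map_upt_Suc append.simps)
    also have "\<dots> = (case subterm_at M [f 0] of None \<Rightarrow> None | Some X \<Rightarrow> subterm_at X (map (\<lambda>i. f (Suc i)) [0..<n]))"
      by (rule subterm_at_append)
    finally show ?thesis .
  qed
  have eq2: "subterm_at M (map f [0..<Suc n]) = subterm_at X (map (\<lambda>i. f (Suc i)) [0..<n])"
    if "subterm_at M [f 0] = Some X" for n X
    using eq[of n] that by (simp only: option.case)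
  show ?thesis
  proof
    assume p: "path M f"
    have "subterm_at M (map f [0..<Suc 0]) \<noteq> None" using p unfolding path_def by blast
    then obtain X where X: "subterm_at M [f 0] = Some X" by auto
    have "path X (\<lambda>n. f (Suc n))" unfolding path_def
    proof
      fix n
      have "subterm_at M (map f [0..<Suc n]) \<noteq> None" using p unfolding path_def by blast
      then show "subterm_at X (map (\<lambda>i. f (Suc i)) [0..<n]) \<noteq> None" using eq2[OF X, of n] by simp
    qed
    then show "\<exists>X. subterm_at M [f 0] = Some X \<and> path X (\<lambda>n. f (Suc n))" using X by blast
  next
    assume "\<exists>X. subterm_at M [f 0] = Some X \<and> path X (\<lambda>n. f (Suc n))"
    then obtain X where X: "subterm_at M [f 0] = Some X" "path X (\<lambda>n. f (Suc n))" by blast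
    show "path M f" unfolding path_def
    proof
      fix n show "subterm_at M (map f [0..<n]) \<noteq> None"
      proof (cases n)
        case 0 then show ?thesis by simp
      next
        case (Suc m) then show ?thesis using eq2[OF X(1), of m] X(2) unfolding path_def by simp
      qed
    qed
  qed
qed

lemma path_Var: "\<not> path (Var x) f"
  by (subst path_Cons) (cases "f 0"; simp)

lemma path_Lam: "path (Lam P) f \<longleftrightarrow> f 0 = DLam \<and> path P (\<lambda>n. f (Suc n))"
  by (subst path_Cons) (cases "f 0"; simp)

lemma path_App: "path (App P Q) f \<longleftrightarrow> (f 0 = DFun \<and> path P (\<lambda>n. f (Suc n))) \<or> (f 0 = DArg \<and> path Q (\<lambda>n. f (Suc n)))"
  by (subst path_Cons) (cases "f 0"; simp)

lemma Lam_Lambda: "Lam P \<in> Lambda001 \<longleftrightarrow> P \<in> Lambda001"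
proof
  assume a: "Lam P \<in> Lambda001"
  show "P \<in> Lambda001" unfolding Lambda001_path
  proof (intro allI impI)
    fix f assume "path P f"
    then have "path (Lam P) (case_nat DLam f)" by (simp add: path_Lam)
    then have "infA (case_nat DLam f)" using a by (simp add: Lambda001_path)
    then show "infA f" using infA_shift[of "case_nat DLam f"] by simp
  qed
next
  assume a: "P \<in> Lambda001"
  show "Lam P \<in> Lambda001" unfolding Lambda001_path
  proof (intro allI impI)
    fix f assume "path (Lam P) f"
    then have "infA (\<lambda>n. f (Suc n))" using a by (simp add: path_Lam Lambda001_path)
    then show "infA f" using infA_shift by blast
  qed
qed

lemma App_Lambda: "App P Q \<in> Lambda001 \<longleftrightarrow> P \<in> Lambda001 \<and> Q \<in> Lambda001"
proof
  assume a: "App P Q \<in> Lambda001"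
  show "P \<in> Lambda001 \<and> Q \<in> Lambda001" unfolding Lambda001_path
  proof (intro conjI allI impI)
    fix f assume "path P f"
    then have "path (App P Q) (case_nat DFun f)" by (simp add: path_App)
    then have "infA (case_nat DFun f)" using a by (simp add: Lambda001_path)
    then show "infA f" using infA_shift[of "case_nat DFun f"] by simp
  next
    fix f assume "path Q f"
    then have "path (App P Q) (case_nat DArg f)" by (simp add: path_App)
    then have "infA (case_nat DArg f)" using a by (simp add: Lambda001_path)
    then show "infA f" using infA_shift[of "case_nat DArg f"] by simp
  qed
next
  assume a: "P \<in> Lambda001 \<and> Q \<in> Lambda001"
  show "App P Q \<in> Lambda001" unfolding Lambda001_path
  proof (intro allI impI)
    fix f assume "path (App P Q) f"
    then have "infA (\<lambda>n. f (Suc n))" using a by (auto simp: path_App Lambda001_path)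
    then show "infA f" using infA_shift by blast
  qed
qed

lemma pos_lift: "subterm_at (lift k N) p = None \<longleftrightarrow> subterm_at N p = None"
proof (induction p arbitrary: k N)
  case (Cons d ps)
  show ?case by (cases d; cases N) (auto simp: Cons)
qed simp

lemma subst_pos:
  assumes "\<forall>q. (subterm_at N q = None) = (subterm_at N0 q = None)"
  shows "subterm_at (subst k N M) p \<noteq> None \<Longrightarrow>
    subterm_at M p \<noteq> None \<or> (\<exists>p1 p2 x. p = p1 @ p2 \<and> subterm_at M p1 = Some (Var x) \<and> subterm_at N0 p2 \<noteq> None)"
  using assms
proof (induction p arbitrary: k N M)
  case Nil
  then show ?case by simp
next
  case (Cons d ps)
  show ?case
  proof (cases M)
    case (Var n)
    show ?thesis
    proof (cases "n = k")
      case True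
      have e: "subst k N M = N" using Var True by simp
      have "subterm_at N (d # ps) \<noteq> None" using Cons.prems(1) unfolding e .
      moreover have "(subterm_at N (d # ps) = None) = (subterm_at N0 (d # ps) = None)" using Cons.prems(2) by (rule spec)
      ultimately have "subterm_at N0 (d # ps) \<noteq> None" by (simp only: not_None_eq)
      moreover have "subterm_at M [] = Some (Var n)" using Var by simp
      ultimately show ?thesis by (intro disjI2 exI[of _ "[]"] exI[of _ "d # ps"] exI[of _ n]) simp
    next
      case False
      then show ?thesis using Cons.prems Var by (cases d) auto
    qed
  next
    case (Lam P)
    have l: "\<forall>q. (subterm_at (lift 0 N) q = None) = (subterm_at N0 q = None)" using Cons.prems(2) pos_lift by blast
    show ?thesis
    proof (cases d)
      case DLam
      then have "subterm_at (subst (Suc k) (lift 0 N) P) ps \<noteq> None" using Cons.prems Lam by simp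
      from Cons.IH[OF this l] show ?thesis
      proof
        assume "subterm_at P ps \<noteq> None" then show ?thesis using Lam DLam by simp
      next
        assume "\<exists>p1 p2 x. ps = p1 @ p2 \<and> subterm_at P p1 = Some (Var x) \<and> subterm_at N0 p2 \<noteq> None"
        then obtain p1 p2 x where "ps = p1 @ p2" "subterm_at P p1 = Some (Var x)" "subterm_at N0 p2 \<noteq> None" by blast
        then show ?thesis using Lam DLam by (intro disjI2 exI[of _ "DLam # p1"] exI[of _ p2] exI[of _ x]) simp
      qed
    qed (use Cons.prems Lam in auto)
  next
    case (App P Q)
    show ?thesis
    proof (cases d)
      case DFun
      then have "subterm_at (subst k N P) ps \<noteq> None" using Cons.prems App by simp
      from Cons.IH[OF this Cons.prems(2)] show ?thesis
      proof
        assume "subterm_at P ps \<noteq> None" then show ?thesis using App DFun by simp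
      next
        assume "\<exists>p1 p2 x. ps = p1 @ p2 \<and> subterm_at P p1 = Some (Var x) \<and> subterm_at N0 p2 \<noteq> None"
        then obtain p1 p2 x where "ps = p1 @ p2" "subterm_at P p1 = Some (Var x)" "subterm_at N0 p2 \<noteq> None" by blast
        then show ?thesis using App DFun by (intro disjI2 exI[of _ "DFun # p1"] exI[of _ p2] exI[of _ x]) simp
      qed
    next
      case DArg
      then have "subterm_at (subst k N Q) ps \<noteq> None" using Cons.prems App by simp
      from Cons.IH[OF this Cons.prems(2)] show ?thesis
      proof
        assume "subterm_at Q ps \<noteq> None" then show ?thesis using App DArg by simp
      next
        assume "\<exists>p1 p2 x. ps = p1 @ p2 \<and> subterm_at Q p1 = Some (Var x) \<and> subterm_at N0 p2 \<noteq> None"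
        then obtain p1 p2 x where "ps = p1 @ p2" "subterm_at Q p1 = Some (Var x)" "subterm_at N0 p2 \<noteq> None" by blast
        then show ?thesis using App DArg by (intro disjI2 exI[of _ "DArg # p1"] exI[of _ p2] exI[of _ x]) simp
      qed
    qed (use Cons.prems App in auto)
  qed
qed


lemma subterm_prefix_None: "a \<le> b \<Longrightarrow> subterm_at M (map f [0..<a]) = None \<Longrightarrow> subterm_at M (map f [0..<b]) = None"
proof -
  assume ab: "a \<le> b" and n: "subterm_at M (map f [0..<a]) = None"
  have "[0..<b] = [0..<a] @ [a..<b]" using upt_add_eq_append[of 0 a "b - a"] ab by simp
  then have "map f [0..<b] = map f [0..<a] @ map f [a..<b]" by simp
  then show ?thesis using n subterm_at_append[of M "map f [0..<a]" "map f [a..<b]"] by simp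
qed

lemma subterm_prefix_None': "subterm_at M p = None \<Longrightarrow> subterm_at M (p @ q) = None"
  using subterm_at_append[of M p q] by simp

lemma map_shift: "map (\<lambda>i. f (l + i)) [0..<m] = map f [l..<l + m]"
proof -
  have "[l..<l + m] = map (\<lambda>i. i + l) [0..<m]" by (simp add: map_add_upt add.commute)
  then show ?thesis by (simp add: comp_def add.commute)
qed

lemma subst_Lambda:
  assumes M: "M \<in> Lambda001" and N0: "N0 \<in> Lambda001" and eqp: "\<forall>q. (subterm_at N q = None) = (subterm_at N0 q = None)"
  shows "subst k N M \<in> Lambda001"
  unfolding Lambda001_path
proof (intro allI impI)
  fix f assume pf: "path (subst k N M) f"
  let ?P = "\<lambda>n. subterm_at M (map f [0..<n]) \<noteq> None"
  show "infA f"
  proof (cases "\<forall>n. ?P n")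
    case True
    then show ?thesis using M by (simp add: Lambda001_path path_def)
  next
    case False
    then obtain n0 where n0: "\<not> ?P n0" by blast
    define m where "m = (LEAST n. \<not> ?P n)"
    have m1: "\<not> ?P m" unfolding m_def using n0 by (rule LeastI)
    have m2: "?P n" if "n < m" for n using that not_less_Least unfolding m_def by blast
    have "m \<noteq> 0" using m1 by (intro notI) simp
    then obtain l where l: "m = Suc l" by (cases m) auto
    have Pl: "?P l" using m2 l by simp
    have notP: "\<not> ?P n" if "n > l" for n using subterm_prefix_None[of m n M f] m1 l that by simp
    have key: "subterm_at N0 (map f [l..<n]) \<noteq> None" if "n > l" for n
    proof -
      have "subterm_at (subst k N M) (map f [0..<n]) \<noteq> None" using pf unfolding path_def by blast
      from subst_pos[OF eqp this] notP[OF that] obtain p1 p2 x where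
        h: "map f [0..<n] = p1 @ p2" "subterm_at M p1 = Some (Var x)" "subterm_at N0 p2 \<noteq> None" by blast
      let ?j = "length p1"
      have jn: "?j \<le> n" using arg_cong[OF h(1), of length] by simp
      have p1: "p1 = map f [0..<?j]"
      proof -
        have "p1 = take ?j (map f [0..<n])" using h(1) by simp
        also have "\<dots> = map f (take ?j [0..<n])" by (simp add: take_map)
        also have "take ?j [0..<n] = [0..<?j]" using jn by (simp add: take_upt)
        finally show ?thesis .
      qed
      have p2: "p2 = map f [?j..<n]"
      proof -
        have "p2 = drop ?j (map f [0..<n])" using h(1) by simp
        also have "\<dots> = map f (drop ?j [0..<n])" by (simp add: drop_map)
        also have "drop ?j [0..<n] = [?j..<n]" by (simp add: drop_upt)
        finally show ?thesis .
      qed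
      have "?P ?j" using h(2) p1 by simp
      then have jl: "?j \<le> l" using notP by (meson not_le)
      have "?j = l"
      proof (rule ccontr)
        assume "?j \<noteq> l"
        then have jl': "?j < l" using jl by simp
        have "[0..<l] = [0..<?j] @ [?j..<l]" using upt_add_eq_append[of 0 ?j "l - ?j"] jl' by simp
        then have "map f [0..<l] = p1 @ map f [?j..<l]" using p1 by simp
        moreover obtain d ds where "map f [?j..<l] = d # ds" using jl' by (cases "map f [?j..<l]") auto
        ultimately have "subterm_at M (map f [0..<l]) = subterm_at (Var x) (d # ds)"
          using subterm_at_append[of M p1 "d # ds"] h(2) by simp
        then show False using Pl by (cases d) auto
      qed
      then show ?thesis using h(3) p2 by simp
    qed
    have "path N0 (\<lambda>i. f (l + i))" unfolding path_def
    proof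
      fix m'
      have "subterm_at N0 (map f [l..<l + m' + 1]) \<noteq> None" using key[of "l + m' + 1"] by simp
      moreover have "map f [l..<l + m' + 1] = map f [l..<l + m'] @ [f (l + m')]" by simp
      ultimately have "subterm_at N0 (map f [l..<l + m']) \<noteq> None" using subterm_prefix_None' by metis
      then show "subterm_at N0 (map (\<lambda>i. f (l + i)) [0..<m']) \<noteq> None" by (simp add: map_shift)
    qed
    then have "infA (\<lambda>i. f (l + i))" using N0 by (simp add: Lambda001_path)
    then show "infA f" unfolding infA_def by (meson le_add2 order.trans)
  qed
qed

lemma hred_Lambda: "hred M M' \<Longrightarrow> M \<in> Lambda001 \<Longrightarrow> M' \<in> Lambda001"
proof (induction rule: hred.induct)
  case (hredex N P)
  then have h: "N \<in> Lambda001" "P \<in> Lambda001" by (auto simp: App_Lambda Lam_Lambda)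
  have "\<forall>q. (subterm_at P q = None) = (subterm_at P q = None)" by simp
  from subst_Lambda[OF h this] show ?case unfolding subst0_def .
next
  case (hlam M M')
  then show ?case by (simp add: Lam_Lambda)
next
  case (happ P P' Q)
  then show ?case by (simp add: App_Lambda)
qed

lemma hreds_Lambda: "hred\<^sup>*\<^sup>* M M' \<Longrightarrow> M \<in> Lambda001 \<Longrightarrow> M' \<in> Lambda001"
  by (induction rule: rtranclp_induct) (auto intro: hred_Lambda)

inductive sw :: "tm \<Rightarrow> bool" where
  "sw (Var x)"
| "sw P \<Longrightarrow> sw (Lam P)"
| "sw P \<Longrightarrow> sw (App P Q)"

definition child :: "tm \<Rightarrow> tm" where
  "child M = (case M of Var x \<Rightarrow> Var x | Lam P \<Rightarrow> P | App P Q \<Rightarrow> P)"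
definition dirf :: "tm \<Rightarrow> dir" where
  "dirf M = (case M of Var x \<Rightarrow> DArg | Lam P \<Rightarrow> DLam | App P Q \<Rightarrow> DFun)"

lemma not_sw_child: "\<not> sw M \<Longrightarrow> \<not> sw (child M) \<and> subterm_at M [dirf M] = Some (child M) \<and> dirf M \<noteq> DArg"
  by (cases M) (auto simp: child_def dirf_def intro: sw.intros)

lemma Lambda_sw: "M \<in> Lambda001 \<Longrightarrow> sw M"
proof (rule ccontr)
  assume M: "M \<in> Lambda001" and ns: "\<not> sw M"
  define g where "g n = (child ^^ n) M" for n
  have g: "\<not> sw (g n)" for n by (induction n) (use ns not_sw_child in \<open>auto simp: g_def\<close>)
  define f where "f n = dirf (g n)" for n
  have sub: "subterm_at M (map f [0..<n]) = Some (g n)" for n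
  proof (induction n)
    case 0 then show ?case by (simp add: g_def)
  next
    case (Suc n)
    have "subterm_at M (map f [0..<Suc n]) = subterm_at M (map f [0..<n] @ [f n])" by simp
    also have "\<dots> = subterm_at (g n) [f n]" using subterm_at_append[of M "map f [0..<n]" "[f n]"] Suc by simp
    also have "\<dots> = Some (g (Suc n))" using not_sw_child[OF g[of n]] by (simp add: f_def g_def)
    finally show ?case .
  qed
  have "path M f" using sub by (simp add: path_def)
  then have "infA f" using M by (simp add: Lambda001_path)
  then obtain m where "f m = DArg" unfolding infA_def by blast
  then show False using not_sw_child[OF g[of m]] by (simp add: f_def)
qed

lemma sw_inf_step: "sw M \<Longrightarrow> M \<in> Lambda001 \<Longrightarrow> (\<forall>Q\<in>Lambda001. R Q Q) \<Longrightarrow> inf_step R M M"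
proof (induction rule: sw.induct)
  case (1 x)
  then show ?case by (auto intro: inf_step.intros)
next
  case (2 P)
  then show ?case by (auto simp: Lam_Lambda intro: inf_step.ilam)
next
  case (3 P Q)
  then show ?case by (auto simp: App_Lambda intro: inf_step.iapp)
qed

lemma beta_inf_refl: "M \<in> Lambda001 \<Longrightarrow> beta_inf M M"
proof -
  assume "M \<in> Lambda001"
  then show ?thesis
  proof (coinduction arbitrary: M rule: beta_inf.coinduct)
    case (beta_inf M)
    have "inf_step (\<lambda>x y. (\<exists>M. x = M \<and> y = M \<and> M \<in> Lambda001) \<or> beta_inf x y) M M"
      by (rule sw_inf_step) (use beta_inf Lambda_sw in auto)
    then show ?case by blast
  qed
qed


lemma hred_beta: "hred M M' \<Longrightarrow> beta M M'"
  by (induction rule: hred.induct) (auto intro: beta.intros)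

lemma hreds_betas: "hred\<^sup>*\<^sup>* M M' \<Longrightarrow> beta\<^sup>*\<^sup>* M M'"
  by (induction rule: rtranclp_induct) (auto intro: hred_beta rtranclp.rtrancl_into_rtrancl)

lemma betas_lam: "beta\<^sup>*\<^sup>* P P' \<Longrightarrow> beta\<^sup>*\<^sup>* (Lam P) (Lam P')"
  by (induction rule: rtranclp_induct) (auto intro: beta.lam rtranclp.rtrancl_into_rtrancl)

lemma betas_appL: "beta\<^sup>*\<^sup>* P P' \<Longrightarrow> beta\<^sup>*\<^sup>* (App P Q) (App P' Q)"
  by (induction rule: rtranclp_induct) (auto intro: beta.appL rtranclp.rtrancl_into_rtrancl)

lemma inf_step_prepend: "beta\<^sup>*\<^sup>* M N \<Longrightarrow> inf_step R N N' \<Longrightarrow> inf_step R M N'"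
proof -
  assume b: "beta\<^sup>*\<^sup>* M N" and i: "inf_step R N N'"
  from i show ?thesis
  proof cases
    case (ivar x)
    have "beta\<^sup>*\<^sup>* M (Var x)" using rtranclp_trans[OF b ivar(2)] .
    then show ?thesis using ivar(1) inf_step.ivar by simp
  next
    case (ilam P P')
    have "beta\<^sup>*\<^sup>* M (Lam P)" using rtranclp_trans[OF b ilam(2)] .
    then show ?thesis using ilam(1,3) inf_step.ilam by simp
  next
    case (iapp P Q P' Q')
    have "beta\<^sup>*\<^sup>* M (App P Q)" using rtranclp_trans[OF b iapp(2)] .
    then show ?thesis using iapp(1,3,4) inf_step.iapp by simp
  qed
qed

lemma beta_inf_prepend: "beta\<^sup>*\<^sup>* M N \<Longrightarrow> beta_inf N N' \<Longrightarrow> beta_inf M N'"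
proof -
  assume b: "beta\<^sup>*\<^sup>* M N" and i: "beta_inf N N'"
  from i have "inf_step beta_inf N N'" by (cases rule: beta_inf.cases)
  then have "inf_step beta_inf M N'" using inf_step_prepend[OF b] by blast
  then show ?thesis by (rule beta_inf.intros)
qed

lemma inf_step_hnf:
  "inf_step beta_inf M N \<Longrightarrow> (head_var_spine N \<longrightarrow> (\<exists>N0. beta\<^sup>*\<^sup>* M N0 \<and> head_var_spine N0)) \<and>
                              (hnf N \<longrightarrow> (\<exists>N0. beta\<^sup>*\<^sup>* M N0 \<and> hnf N0))"
proof (induction rule: inf_step.induct)
  case (ivar M x)
  then show ?case using head_var_spine.intros(1) hnf_Var by blast
next
  case (ilam M P P')
  have "\<exists>N0. beta\<^sup>*\<^sup>* M N0 \<and> hnf N0" if "hnf (Lam P')"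
  proof -
    have "hnf P'" using that by (auto elim: hnf.cases)
    then obtain P0 where "beta\<^sup>*\<^sup>* P P0" "hnf P0" using ilam.IH by blast
    then have "beta\<^sup>*\<^sup>* M (Lam P0)" "hnf (Lam P0)"
      using rtranclp_trans[OF ilam.hyps(1) betas_lam] hnf.intros(2) by auto
    then show ?thesis by blast
  qed
  then show ?case by simp
next
  case (iapp M P Q P' Q')
  have a: "\<exists>N0. beta\<^sup>*\<^sup>* M N0 \<and> head_var_spine N0" if "head_var_spine (App P' Q')"
  proof -
    have "head_var_spine P'" using that by (simp add: hvs_App)
    then obtain P0 where "beta\<^sup>*\<^sup>* P P0" "head_var_spine P0" using iapp.IH by blast
    then have "beta\<^sup>*\<^sup>* M (App P0 Q)" "head_var_spine (App P0 Q)"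
      using rtranclp_trans[OF iapp.hyps(1) betas_appL] by (auto simp: hvs_App)
    then show ?thesis by blast
  qed
  show ?case using a hnf_App hvs_hnf by blast
qed

theorem mainTheorem10:
  assumes "M \<in> Lambda001"
  shows "((\<exists>N\<in>Lambda001. hnf N \<and> beta_inf M N) \<longleftrightarrow> (\<exists>s\<in>Taylor M. nf_r s \<noteq> {}))
       \<and> ((\<exists>s\<in>Taylor M. nf_r s \<noteq> {}) \<longleftrightarrow> (\<exists>N\<in>Lambda001. hnf N \<and> hred\<^sup>*\<^sup>* M N))"
proof -
  have i12: "\<exists>s\<in>Taylor M. nf_r s \<noteq> {}" if h: "\<exists>N\<in>Lambda001. hnf N \<and> beta_inf M N"
  proof -
    obtain N where N: "hnf N" "beta_inf M N" using h by blast
    then have "inf_step beta_inf M N" by (auto elim: beta_inf.cases)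
    then obtain N0 where "beta\<^sup>*\<^sup>* M N0" "hnf N0" using inf_step_hnf N(1) by blast
    then obtain s where "taylor s M" "nf_r s \<noteq> {}" using beta_hnf_taylor by blast
    then show ?thesis by (auto simp: Taylor_def)
  qed
  have i23: "\<exists>N\<in>Lambda001. hnf N \<and> hred\<^sup>*\<^sup>* M N" if h: "\<exists>s\<in>Taylor M. nf_r s \<noteq> {}"
  proof -
    obtain s where "taylor s M" "nf_r s \<noteq> {}" using h by (auto simp: Taylor_def)
    then obtain N where "hred\<^sup>*\<^sup>* M N" "hnf N" using taylor_head_norm by blast
    moreover have "N \<in> Lambda001" using hreds_Lambda calculation(1) assms by blast
    ultimately show ?thesis by blast
  qed
  have i31: "\<exists>N\<in>Lambda001. hnf N \<and> beta_inf M N" if h: "\<exists>N\<in>Lambda001. hnf N \<and> hred\<^sup>*\<^sup>* M N"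
  proof -
    obtain N where N: "N \<in> Lambda001" "hnf N" "hred\<^sup>*\<^sup>* M N" using h by blast
    have "beta_inf M N" using beta_inf_prepend[OF hreds_betas[OF N(3)] beta_inf_refl[OF N(1)]] .
    then show ?thesis using N by blast
  qed
  show ?thesis using i12 i23 i31 by blast
qed


end
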